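(* For every integer $n_0\ge1$ and every $\epsilon>0$ there is $N=N(\epsilon,n_0)$ (depending only on $\epsilon,n_0$ and the constants $\beta,m_0$) such that for every $(\mu,\nu)\in\boldsymbol{\mathcal P}$, $$\mathbb E\big(|Z_n(x,y)-Z_\infty(x,y)|\big)\le\epsilon$$ whenever $n\ge N$ and $(x,y)\in\mathbb S$ with $x+y\ge1/n_0$.
   Context: Fix $0<m_0\le\beta<\infty$. $\boldsymbol{\mathcal P}$: pairs $(\mu,\nu)$ of probability measures on $[0,\beta]$ with $\int k\,\mu(dk)=\int k\,\nu(dk)\ge m_0$. $\mathbb S=[0,\infty)^2\setminus\{(0,0)\}$. RRU with reinforcement distributions $(\mu,\nu)$ and initial composition $(x,y)$: with $\{U_n\}$ i.i.d. uniform$[0,1]$ independent of i.i.d. $\{(V_n,W_n)\}$ with uniform$[0,1]$ marginals, $R_X(n)=q_\mu(V_n)$, $R_Y(n)=q_\nu(W_n)$ (quantile functions), $X_0=x,Y_0=y$, $X_{n+1}=X_n+R_X(n+1)\mathbb I(n+1)$, $Y_{n+1}=Y_n+R_Y(n+1)(1-\mathbb I(n+1))$, $\mathbb I(n+1)=\mathbf 1\{U_{n+1}\le X_n/(X_n+Y_n)\}$; $Z_n(x,y)=X_n/(X_n+Y_n)$, which converges a.s. to $Z_\infty(x,y)$. *)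

theory Defs
  imports "HOL-Probability.Probability"
begin

definition quantile :: "real measure \<Rightarrow> real \<Rightarrow> real" where
  "quantile \<mu> v = Inf {t::real. v \<le> measure \<mu> {..t}}"

definition in_P :: "real \<Rightarrow> real \<Rightarrow> real measure \<Rightarrow> real measure \<Rightarrow> bool" where
  "in_P \<beta> m0 \<mu> \<nu> \<longleftrightarrow>
     prob_space \<mu> \<and> sets \<mu> = sets borel \<and> measure \<mu> {0..\<beta>} = 1 \<and>
     prob_space \<nu> \<and> sets \<nu> = sets borel \<and> measure \<nu> {0..\<beta>} = 1 \<and>
     (\<integral>k. k \<partial>\<mu>) = (\<integral>k. k \<partial>\<nu>) \<and> (\<integral>k. k \<partial>\<mu>) \<ge> m0"

text \<open>Urn composition (X_n, Y_n) of the randomly reinforced urn, driven by the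
  sample sequences u, v, w (values of U_n, V_n, W_n) and the reinforcement
  functions qX = q_mu, qY = q_nu.\<close>
fun rru :: "(real \<Rightarrow> real) \<Rightarrow> (real \<Rightarrow> real) \<Rightarrow> real \<Rightarrow> real \<Rightarrow>
    (nat \<Rightarrow> real) \<Rightarrow> (nat \<Rightarrow> real) \<Rightarrow> (nat \<Rightarrow> real) \<Rightarrow> nat \<Rightarrow> real \<times> real" where
  "rru qX qY x y u v w 0 = (x, y)"
| "rru qX qY x y u v w (Suc n) =
     (let (X, Y) = rru qX qY x y u v w n in
      if u (Suc n) \<le> X / (X + Y)
      then (X + qX (v (Suc n)), Y)
      else (X, Y + qY (w (Suc n))))"

definition rru_Z :: "real measure \<Rightarrow> real measure \<Rightarrow> real \<Rightarrow> real \<Rightarrow>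
    (nat \<Rightarrow> 'a \<Rightarrow> real) \<Rightarrow> (nat \<Rightarrow> 'a \<Rightarrow> real) \<Rightarrow> (nat \<Rightarrow> 'a \<Rightarrow> real) \<Rightarrow> nat \<Rightarrow> 'a \<Rightarrow> real" where
  "rru_Z \<mu> \<nu> x y U V W n \<omega> =
     (let (X, Y) = rru (quantile \<mu>) (quantile \<nu>) x y (\<lambda>i. U i \<omega>) (\<lambda>i. V i \<omega>) (\<lambda>i. W i \<omega>) n
      in X / (X + Y))"

text \<open>Standing hypotheses on the driving randomness: U_n i.i.d. uniform[0,1],
  (V_n, W_n) i.i.d. with uniform[0,1] marginals (arbitrary coupling), and the
  family {U_n} independent of the family {(V_n, W_n)}.\<close>
definition driving_noise :: "'a measure \<Rightarrow> (nat \<Rightarrow> 'a \<Rightarrow> real) \<Rightarrow> (nat \<Rightarrow> 'a \<Rightarrow> real) \<Rightarrow> (nat \<Rightarrow> 'a \<Rightarrow> real) \<Rightarrow> bool" where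
  "driving_noise M U V W \<longleftrightarrow>
     prob_space M \<and>
     (\<forall>n. U n \<in> borel_measurable M \<and> V n \<in> borel_measurable M \<and> W n \<in> borel_measurable M) \<and>
     (\<forall>n. distr M borel (U n) = uniform_measure lborel {0..1}) \<and>
     (\<forall>n. distr M borel (V n) = uniform_measure lborel {0..1}) \<and>
     (\<forall>n. distr M borel (W n) = uniform_measure lborel {0..1}) \<and>
     (\<forall>n. distr M borel (\<lambda>\<omega>. (V n \<omega>, W n \<omega>)) = distr M borel (\<lambda>\<omega>. (V 0 \<omega>, W 0 \<omega>))) \<and>
     prob_space.indep_vars M (\<lambda>_. borel)
        (\<lambda>i. case i of Inl n \<Rightarrow> (\<lambda>\<omega>. (U n \<omega>, 0::real)) | Inr n \<Rightarrow> (\<lambda>\<omega>. (V n \<omega>, W n \<omega>)))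
        (UNIV :: (nat + nat) set)"

end

theory Submission
  imports Defs
begin

definition qc :: "real \<Rightarrow> real measure \<Rightarrow> real \<Rightarrow> real" where
  "qc \<beta> \<mu> v = (if v \<le> 0 then 0 else if v \<le> 1 then quantile \<mu> v else \<beta>)"

locale qsetup =
  fixes \<mu> :: "real measure" and \<beta> :: real
  assumes ps: "prob_space \<mu>" and sb: "sets \<mu> = sets borel" and one: "measure \<mu> {0..\<beta>} = 1"
begin

lemma rd: "real_distribution \<mu>"
  using ps sb by (simp add: real_distribution_def real_distribution_axioms_def)

lemma sp: "space \<mu> = UNIV"
  using sets_eq_imp_space_eq[OF sb] by simp

lemma F_neg: assumes "t < 0" shows "measure \<mu> {..t} = 0"
proof -
  interpret prob_space \<mu> by (rule ps)
  have "measure \<mu> {..t} \<le> measure \<mu> (space \<mu> - {0..\<beta>})"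
    using assms sb sp by (intro finite_measure_mono) auto
  also have "\<dots> = 0" using prob_compl[of "{0..\<beta>}"] one sb by simp
  finally show ?thesis using measure_nonneg[of \<mu> "{..t}"] by linarith
qed

lemma F_beta: "measure \<mu> {..\<beta>} = 1"
proof -
  interpret prob_space \<mu> by (rule ps)
  have "measure \<mu> {0..\<beta>} \<le> measure \<mu> {..\<beta>}"
    using sb by (intro finite_measure_mono) auto
  then show ?thesis using one prob_le_1[of "{..\<beta>}"] by simp
qed

lemma F_mono: "s \<le> t \<Longrightarrow> measure \<mu> {..s} \<le> measure \<mu> {..t}"
proof -
  interpret prob_space \<mu> by (rule ps)
  assume "s \<le> t" then show ?thesis using sb by (intro finite_measure_mono) auto
qed

lemma F_le1: "measure \<mu> {..t} \<le> 1"
proof -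
  interpret prob_space \<mu> by (rule ps)
  show ?thesis by (rule prob_le_1)
qed

lemma quantile_galois:
  assumes v: "0 < v" "v \<le> 1"
  shows "quantile \<mu> v \<le> t \<longleftrightarrow> v \<le> measure \<mu> {..t}"
    and "0 \<le> quantile \<mu> v" and "quantile \<mu> v \<le> \<beta>"
proof -
  define S where "S = {t. v \<le> measure \<mu> {..t}}"
  have q: "quantile \<mu> v = Inf S" by (simp add: quantile_def S_def)
  have bS: "\<beta> \<in> S" using F_beta v by (simp add: S_def)
  have lb: "\<And>t. t \<in> S \<Longrightarrow> 0 \<le> t"
  proof (rule ccontr)
    fix t assume "t \<in> S" "\<not> 0 \<le> t"
    then show False using F_neg[of t] v by (simp add: S_def)
  qed
  have bdd: "bdd_below S" using lb unfolding bdd_below_def by auto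
  have ne: "S \<noteq> {}" using bS by auto
  have InS: "Inf S \<in> S"
  proof -
    interpret real_distribution \<mu> by (rule rd)
    have "((cdf \<mu>) \<longlongrightarrow> cdf \<mu> (Inf S)) (at_right (Inf S))"
      using cdf_is_right_cont[of "Inf S"] by (simp add: continuous_within)
    moreover have "eventually (\<lambda>t. v \<le> cdf \<mu> t) (at_right (Inf S))"
    proof (rule eventually_at_rightI[where b="Inf S + 1"])
      fix t assume "t \<in> {Inf S<..<Inf S + 1}"
      then have "Inf S < t" by auto
      then obtain s where "s \<in> S" "s < t" using cInf_less_iff[OF ne bdd] by auto
      then show "v \<le> cdf \<mu> t" using F_mono[of s t] by (simp add: S_def cdf_def)
    qed simp
    ultimately have "v \<le> cdf \<mu> (Inf S)"
      by (intro tendsto_lowerbound) auto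
    then show ?thesis by (simp add: S_def cdf_def)
  qed
  show "quantile \<mu> v \<le> t \<longleftrightarrow> v \<le> measure \<mu> {..t}"
  proof
    assume "quantile \<mu> v \<le> t"
    then show "v \<le> measure \<mu> {..t}" using InS F_mono[of "Inf S" t] q by (simp add: S_def)
  next
    assume "v \<le> measure \<mu> {..t}"
    then have "t \<in> S" by (simp add: S_def)
    then show "quantile \<mu> v \<le> t" using q cInf_lower[OF _ bdd] by auto
  qed
  show "0 \<le> quantile \<mu> v" using InS lb q by auto
  show "quantile \<mu> v \<le> \<beta>" using q cInf_lower[OF bS bdd] by auto
qed

lemma qc_range: "0 \<le> \<beta> \<Longrightarrow> 0 \<le> qc \<beta> \<mu> v \<and> qc \<beta> \<mu> v \<le> \<beta>"
  using quantile_galois(2,3)[of v] by (auto simp: qc_def)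

lemma qc_mono: assumes "0 \<le> \<beta>" shows "mono (qc \<beta> \<mu>)"
proof (rule monoI)
  fix a b :: real assume ab: "a \<le> b"
  show "qc \<beta> \<mu> a \<le> qc \<beta> \<mu> b"
  proof (cases "a \<le> 0")
    case True then show ?thesis using qc_range[OF assms, of b] by (simp add: qc_def)
  next
    case False
    show ?thesis
    proof (cases "b \<le> 1")
      case True
      have "v \<le> measure \<mu> {..quantile \<mu> b}" if "v = b" for v
        using quantile_galois(1)[of b "quantile \<mu> b"] False ab True that by auto
      then have "quantile \<mu> a \<le> quantile \<mu> b"
        using quantile_galois(1)[of a "quantile \<mu> b"] False ab True by auto
      then show ?thesis using False ab True by (simp add: qc_def)
    next
      case False2: False
      then show ?thesis using qc_range[OF assms, of a] by (simp add: qc_def)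
    qed
  qed
qed

lemma qc_meas[measurable]: "0 \<le> \<beta> \<Longrightarrow> qc \<beta> \<mu> \<in> borel_measurable borel"
  by (rule borel_measurable_mono[OF qc_mono])

lemma qc_set:
  assumes b: "0 \<le> \<beta>"
  shows "{0..1} \<inter> qc \<beta> \<mu> -` {..t} = (if 0 \<le> t then {0..measure \<mu> {..t}} else {})"
proof (cases "0 \<le> t")
  case True
  have "v \<in> {0..1} \<inter> qc \<beta> \<mu> -` {..t} \<longleftrightarrow> v \<in> {0..measure \<mu> {..t}}" for v
  proof (cases "v = 0")
    case True then show ?thesis using \<open>0 \<le> t\<close> measure_nonneg[of \<mu> "{..t}"]
      by (simp add: qc_def)
  next
    case False
    show ?thesis
    proof (cases "0 < v \<and> v \<le> 1")
      case True then show ?thesis using quantile_galois(1)[of v t] by (auto simp: qc_def)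
    next
      case False then show ?thesis using \<open>v \<noteq> 0\<close> F_le1[of t] by auto
    qed
  qed
  then show ?thesis using True by (simp add: set_eq_iff)
next
  case False
  have "qc \<beta> \<mu> v > t" for v using qc_range[OF b, of v] False by linarith
  then show ?thesis using False by (auto simp: not_le[symmetric])
qed

lemma distr_qc: assumes b: "0 \<le> \<beta>"
  shows "distr (uniform_measure lborel {0..1}) borel (qc \<beta> \<mu>) = \<mu>"
proof (rule cdf_unique)
  have pu: "prob_space (uniform_measure lborel {0..1::real})"
    by (intro prob_space_uniform_measure) auto
  show "real_distribution (distr (uniform_measure lborel {0..1}) borel (qc \<beta> \<mu>))"
    unfolding real_distribution_def real_distribution_axioms_def
    using pu b by (auto intro!: prob_space.prob_space_distr)
  show "real_distribution \<mu>" by (rule rd)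
  show "cdf (distr (uniform_measure lborel {0..1}) borel (qc \<beta> \<mu>)) = cdf \<mu>"
  proof
    fix t
    have ms: "qc \<beta> \<mu> -` {..t} \<in> sets borel"
      using measurable_sets[OF qc_meas[OF b], of "{..t}"] by simp
    have "cdf (distr (uniform_measure lborel {0..1}) borel (qc \<beta> \<mu>)) t
       = measure (uniform_measure lborel {0..1}) (qc \<beta> \<mu> -` {..t})"
      unfolding cdf_def using b ms by (subst measure_distr) (auto simp: vimage_def)
    also have "\<dots> = measure lborel ({0..1} \<inter> qc \<beta> \<mu> -` {..t})"
      using b ms by (subst measure_uniform_measure) auto
    also have "\<dots> = measure \<mu> {..t}"
      using qc_set[OF b, of t] F_neg[of t] measure_nonneg[of \<mu> "{..t}"] by auto
    finally show "cdf (distr (uniform_measure lborel {0..1}) borel (qc \<beta> \<mu>)) t = cdf \<mu> t"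
      by (simp add: cdf_def)
  qed
qed

end

definition Yfam :: "(nat \<Rightarrow> 'a \<Rightarrow> real) \<Rightarrow> (nat \<Rightarrow> 'a \<Rightarrow> real) \<Rightarrow> (nat \<Rightarrow> 'a \<Rightarrow> real) \<Rightarrow> nat + nat \<Rightarrow> 'a \<Rightarrow> real \<times> real" where
  "Yfam U V W i = (case i of Inl n \<Rightarrow> (\<lambda>\<omega>. (U n \<omega>, 0::real)) | Inr n \<Rightarrow> (\<lambda>\<omega>. (V n \<omega>, W n \<omega>)))"

definition KK :: "nat \<Rightarrow> (nat + nat) set" where "KK m = Inl ` {..m} \<union> Inr ` {..m}"
definition BB :: "nat \<Rightarrow> (nat + nat) set" where "BB m = {Inl (Suc m), Inr (Suc m)}"

lemma fst_b[measurable]: "(fst :: real\<times>real \<Rightarrow> real) \<in> borel_measurable borel"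
  using measurable_fst[of "borel::real measure" "borel::real measure"] by (simp add: borel_prod)
lemma snd_b[measurable]: "(snd :: real\<times>real \<Rightarrow> real) \<in> borel_measurable borel"
  using measurable_snd[of "borel::real measure" "borel::real measure"] by (simp add: borel_prod)

lemma comp_fst: "i \<in> I \<Longrightarrow> (\<lambda>p. fst (p i)) \<in> measurable (PiM I (\<lambda>_. borel :: (real\<times>real) measure)) borel"
  using measurable_compose[OF measurable_component_singleton[of i I "\<lambda>_. borel :: (real\<times>real) measure"] fst_b] by simp
lemma comp_snd: "i \<in> I \<Longrightarrow> (\<lambda>p. snd (p i)) \<in> measurable (PiM I (\<lambda>_. borel :: (real\<times>real) measure)) borel"
  using measurable_compose[OF measurable_component_singleton[of i I "\<lambda>_. borel :: (real\<times>real) measure"] snd_b] by simp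

locale noise = prob_space M for M :: "'a measure" +
  fixes U V W :: "nat \<Rightarrow> 'a \<Rightarrow> real"
  assumes dn: "driving_noise M U V W"
begin

lemma measU[measurable]: "U n \<in> borel_measurable M"
  and measV[measurable]: "V n \<in> borel_measurable M"
  and measW[measurable]: "W n \<in> borel_measurable M"
  using dn by (auto simp: driving_noise_def)

lemma lawU: "distr M borel (U n) = uniform_measure lborel {0..1}"
  and lawV: "distr M borel (V n) = uniform_measure lborel {0..1}"
  and lawW: "distr M borel (W n) = uniform_measure lborel {0..1}"
  using dn by (auto simp: driving_noise_def)

lemma ind: "indep_vars (\<lambda>_. borel) (Yfam U V W) UNIV"
proof -
  have "indep_vars (\<lambda>_. borel)
        (\<lambda>i. case i of Inl n \<Rightarrow> (\<lambda>\<omega>. (U n \<omega>, 0::real)) | Inr n \<Rightarrow> (\<lambda>\<omega>. (V n \<omega>, W n \<omega>)))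
        (UNIV :: (nat + nat) set)"
    using dn by (simp add: driving_noise_def)
  then show ?thesis unfolding Yfam_def[abs_def] .
qed

lemma unif_ps: "prob_space (uniform_measure lborel {0..1::real})"
  by (intro prob_space_uniform_measure) auto

lemma integral_unif:
  fixes f :: "real \<Rightarrow> real"
  assumes "f \<in> borel_measurable borel"
  shows "(\<integral>\<omega>. f (U n \<omega>) \<partial>M) = (\<integral>v. f v \<partial>uniform_measure lborel {0..1})"
    and "(\<integral>\<omega>. f (V n \<omega>) \<partial>M) = (\<integral>v. f v \<partial>uniform_measure lborel {0..1})"
    and "(\<integral>\<omega>. f (W n \<omega>) \<partial>M) = (\<integral>v. f v \<partial>uniform_measure lborel {0..1})"
  using integral_distr[of "U n" M borel f, symmetric] integral_distr[of "V n" M borel f, symmetric]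
     integral_distr[of "W n" M borel f, symmetric] assms
  by (simp_all add: lawU lawV lawW)

lemma AE_unit: "AE \<omega> in M. \<forall>n. 0 < V n \<omega> \<and> V n \<omega> \<le> 1 \<and> 0 < W n \<omega> \<and> W n \<omega> \<le> 1"
proof -
  have AEu: "AE v in uniform_measure lborel {0..1::real}. 0 < v \<and> v \<le> 1"
    by (intro AE_uniform_measureI) (auto intro!: eventually_mono[OF AE_lborel_singleton[of 0]])
  have "AE \<omega> in M. 0 < V n \<omega> \<and> V n \<omega> \<le> 1" for n
    using AEu unfolding lawV[of n, symmetric] by (subst (asm) AE_distr_iff) auto
  moreover have "AE \<omega> in M. 0 < W n \<omega> \<and> W n \<omega> \<le> 1" for n
    using AEu unfolding lawW[of n, symmetric] by (subst (asm) AE_distr_iff) auto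
  ultimately show ?thesis by (simp add: AE_all_countable)
qed

lemma probU: assumes "0 \<le> z" "z \<le> 1" shows "prob {\<omega> \<in> space M. U n \<omega> \<le> z} = z"
proof -
  have "prob {\<omega> \<in> space M. U n \<omega> \<le> z} = measure (distr M borel (U n)) {..z}"
    by (subst measure_distr) (auto simp: vimage_def Int_def conj_commute)
  also have "\<dots> = measure lborel ({0..1} \<inter> {..z})"
    by (simp add: lawU)
  also have "{0..1} \<inter> {..z} = {0..z}" using assms by auto
  finally show ?thesis using assms by simp
qed

lemma indep_pair:
  assumes "A \<inter> B = {}"
  shows "indep_var (PiM A (\<lambda>_. borel)) (\<lambda>\<omega>. restrict (\<lambda>i. Yfam U V W i \<omega>) A)
                   (PiM B (\<lambda>_. borel)) (\<lambda>\<omega>. restrict (\<lambda>i. Yfam U V W i \<omega>) B)"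
  using indep_var_restrict[OF ind assms] by simp

lemma indep_UV: "indep_var borel (U n) borel (V n)" and indep_UW: "indep_var borel (U n) borel (W n)"
proof -
  have d: "{Inl n} \<inter> {Inr n} = ({} :: (nat+nat) set)" by auto
  have m1: "(\<lambda>p. fst (p (Inl n))) \<in> measurable (PiM {Inl n} (\<lambda>_. borel :: (real\<times>real) measure)) borel"
    by (rule comp_fst) simp
  have m2: "(\<lambda>p. fst (p (Inr n))) \<in> measurable (PiM {Inr n} (\<lambda>_. borel :: (real\<times>real) measure)) borel"
    by (rule comp_fst) simp
  have m3: "(\<lambda>p. snd (p (Inr n))) \<in> measurable (PiM {Inr n} (\<lambda>_. borel :: (real\<times>real) measure)) borel"
    by (rule comp_snd) simp
  have e1: "(\<lambda>p. fst (p (Inl n))) \<circ> (\<lambda>\<omega>. restrict (\<lambda>i. Yfam U V W i \<omega>) {Inl n}) = U n"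
    by (auto simp: Yfam_def)
  have e2: "(\<lambda>p. fst (p (Inr n))) \<circ> (\<lambda>\<omega>. restrict (\<lambda>i. Yfam U V W i \<omega>) {Inr n}) = V n"
    by (auto simp: Yfam_def)
  have e3: "(\<lambda>p. snd (p (Inr n))) \<circ> (\<lambda>\<omega>. restrict (\<lambda>i. Yfam U V W i \<omega>) {Inr n}) = W n"
    by (auto simp: Yfam_def)
  show "indep_var borel (U n) borel (V n)"
    using indep_var_compose[OF indep_pair[OF d] m1 m2] unfolding e1 e2 .
  show "indep_var borel (U n) borel (W n)"
    using indep_var_compose[OF indep_pair[OF d] m1 m3] unfolding e1 e3 .
qed

definition H :: "nat \<Rightarrow> 'a \<Rightarrow> (nat + nat) \<Rightarrow> real \<times> real" where
  "H m \<omega> = restrict (\<lambda>i. Yfam U V W i \<omega>) (KK m)"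

definition G :: "nat \<Rightarrow> 'a \<Rightarrow> (nat + nat) \<Rightarrow> real \<times> real" where
  "G m \<omega> = restrict (\<lambda>i. Yfam U V W i \<omega>) (BB m)"

abbreviation "PK m \<equiv> PiM (KK m) (\<lambda>_. borel :: (real \<times> real) measure)"
abbreviation "PB m \<equiv> PiM (BB m) (\<lambda>_. borel :: (real \<times> real) measure)"

lemma indep_H_G: "indep_var (PK m) (H m) (PB m) (G m)"
  unfolding H_def G_def by (rule indep_pair) (auto simp: KK_def BB_def)

lemma H_meas[measurable]: "H m \<in> measurable M (PK m)"
  using indep_var_rv1[OF indep_H_G] .
lemma G_meas[measurable]: "G m \<in> measurable M (PB m)"
  using indep_var_rv2[OF indep_H_G] .

lemma G_U: "fst (G m \<omega> (Inl (Suc m))) = U (Suc m) \<omega>"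
  and G_V: "fst (G m \<omega> (Inr (Suc m))) = V (Suc m) \<omega>"
  and G_W: "snd (G m \<omega> (Inr (Suc m))) = W (Suc m) \<omega>"
  by (auto simp: G_def BB_def Yfam_def)

lemma step:
  fixes f :: "((nat + nat) \<Rightarrow> real \<times> real) \<Rightarrow> ((nat + nat) \<Rightarrow> real \<times> real) \<Rightarrow> real"
  assumes fm[measurable]: "case_prod f \<in> borel_measurable (PK m \<Otimes>\<^sub>M PB m)"
    and bd: "\<And>a b. \<bar>f a b\<bar> \<le> C"
  shows "(\<integral>\<omega>. f (H m \<omega>) (G m \<omega>) \<partial>M) = (\<integral>\<omega>. (\<integral>\<omega>'. f (H m \<omega>) (G m \<omega>') \<partial>M) \<partial>M)"
proof -
  let ?D1 = "distr M (PK m) (H m)" and ?D2 = "distr M (PB m) (G m)"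
  have eq: "?D1 \<Otimes>\<^sub>M ?D2 = distr M (PK m \<Otimes>\<^sub>M PB m) (\<lambda>x. (H m x, G m x))"
    using indep_H_G[of m] unfolding indep_var_distribution_eq by simp
  interpret D1: prob_space ?D1 by (rule prob_space_distr) simp
  interpret D2: prob_space ?D2 by (rule prob_space_distr) simp
  interpret D12: pair_prob_space ?D1 ?D2 ..
  have int: "integrable (?D1 \<Otimes>\<^sub>M ?D2) (case_prod f)"
    by (rule D12.integrable_const_bound[where B=C]) (auto simp: bd)
  have "(\<integral>\<omega>. f (H m \<omega>) (G m \<omega>) \<partial>M) = integral\<^sup>L (distr M (PK m \<Otimes>\<^sub>M PB m) (\<lambda>x. (H m x, G m x))) (case_prod f)"
    by (subst integral_distr) auto
  also have "\<dots> = integral\<^sup>L (?D1 \<Otimes>\<^sub>M ?D2) (case_prod f)" by (simp add: eq)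
  also have "\<dots> = (\<integral>a. (\<integral>b. f a b \<partial>?D2) \<partial>?D1)"
    using D12.integral_fst[OF int] by simp
  also have "\<dots> = (\<integral>a. (\<integral>\<omega>'. f a (G m \<omega>') \<partial>M) \<partial>?D1)"
    by (intro Bochner_Integration.integral_cong refl) (subst integral_distr, auto intro: measurable_Pair2[OF fm])
  also have "\<dots> = (\<integral>\<omega>. (\<integral>\<omega>'. f (H m \<omega>) (G m \<omega>') \<partial>M) \<partial>M)"
  proof (subst integral_distr)
    show "(\<lambda>a. \<integral>\<omega>'. f a (G m \<omega>') \<partial>M) \<in> borel_measurable (PK m)"
    proof -
      have "(\<lambda>a. \<integral>b. f a b \<partial>?D2) \<in> borel_measurable (PK m)"
        by (rule D2.borel_measurable_lebesgue_integral) (simp add: fm)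
      moreover have "\<And>a. a \<in> space (PK m) \<Longrightarrow> (\<integral>b. f a b \<partial>?D2) = (\<integral>\<omega>'. f a (G m \<omega>') \<partial>M)"
        by (subst integral_distr, auto intro: measurable_Pair2[OF fm])
      ultimately show ?thesis by (rule measurable_cong[THEN iffD1, rotated]) simp
    qed
  qed auto
  finally show ?thesis .
qed

end

definition ru :: "((nat + nat) \<Rightarrow> real \<times> real) \<Rightarrow> nat \<Rightarrow> real" where "ru p i = fst (p (Inl i))"
definition rv :: "((nat + nat) \<Rightarrow> real \<times> real) \<Rightarrow> nat \<Rightarrow> real" where "rv p i = fst (p (Inr i))"
definition rw :: "((nat + nat) \<Rightarrow> real \<times> real) \<Rightarrow> nat \<Rightarrow> real" where "rw p i = snd (p (Inr i))"

definition nxt :: "(real \<Rightarrow> real) \<Rightarrow> (real \<Rightarrow> real) \<Rightarrow> real \<times> real \<Rightarrow> real \<Rightarrow> real \<Rightarrow> real \<Rightarrow> real \<times> real" where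
  "nxt qX qY s u v w = (if u \<le> fst s / (fst s + snd s) then (fst s + qX v, snd s) else (fst s, snd s + qY w))"

lemma rru_Suc_nxt: "rru qX qY x y u v w (Suc n) = nxt qX qY (rru qX qY x y u v w n) (u (Suc n)) (v (Suc n)) (w (Suc n))"
  by (simp add: nxt_def split: prod.split)

lemma rru_cong:
  assumes "\<And>i. 1 \<le> i \<Longrightarrow> i \<le> n \<Longrightarrow> u i = u' i \<and> v i = v' i \<and> w i = w' i"
  shows "rru qX qY x y u v w n = rru qX qY x y u' v' w' n"
  using assms by (induction n) (auto simp: rru_Suc_nxt simp del: rru.simps(2))

lemma nxt_meas[measurable]:
  assumes [measurable]: "qX \<in> borel_measurable borel" "qY \<in> borel_measurable borel"
    and [measurable]: "s \<in> borel_measurable N" "u \<in> borel_measurable N" "v \<in> borel_measurable N" "w \<in> borel_measurable N"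
  shows "(\<lambda>p. nxt qX qY (s p) (u p) (v p) (w p)) \<in> borel_measurable N"
proof -
  have [measurable]: "(\<lambda>p. fst (s p)) \<in> borel_measurable N" "(\<lambda>p. snd (s p)) \<in> borel_measurable N"
    using measurable_compose[OF assms(3) fst_b] measurable_compose[OF assms(3) snd_b] by auto
  show ?thesis unfolding nxt_def by measurable
qed

locale proc = noise M U V W for M :: "'a measure" and U V W +
  fixes qX qY :: "real \<Rightarrow> real" and x y :: real
  assumes qXm[measurable]: "qX \<in> borel_measurable borel" and qYm[measurable]: "qY \<in> borel_measurable borel"
    and qXnn: "\<And>v. 0 \<le> qX v" and qYnn: "\<And>v. 0 \<le> qY v"
    and x0: "0 \<le> x" and y0: "0 \<le> y" and xy: "0 < x + y"
begin

definition S :: "nat \<Rightarrow> 'a \<Rightarrow> real \<times> real" where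
  "S n \<omega> = rru qX qY x y (\<lambda>i. U i \<omega>) (\<lambda>i. V i \<omega>) (\<lambda>i. W i \<omega>) n"

definition HS :: "nat \<Rightarrow> ((nat + nat) \<Rightarrow> real \<times> real) \<Rightarrow> real \<times> real" where
  "HS n p = rru qX qY x y (ru p) (rv p) (rw p) n"

lemma inv_rru: "0 \<le> fst (rru qX qY x y u v w n) \<and> 0 \<le> snd (rru qX qY x y u v w n) \<and>
   x + y \<le> fst (rru qX qY x y u v w n) + snd (rru qX qY x y u v w n)"
proof (induction n)
  case 0 then show ?case using x0 y0 by simp
next
  case (Suc n) then show ?case
    using qXnn[of "v (Suc n)"] qYnn[of "w (Suc n)"]
    by (auto simp: rru_Suc_nxt nxt_def simp del: rru.simps(2))
qed

lemma H_read: "i \<le> m \<Longrightarrow> ru (H m \<omega>) i = U i \<omega> \<and> rv (H m \<omega>) i = V i \<omega> \<and> rw (H m \<omega>) i = W i \<omega>"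
  by (auto simp: ru_def rv_def rw_def H_def KK_def Yfam_def)

lemma S_HS: "n \<le> m \<Longrightarrow> S n \<omega> = HS n (H m \<omega>)"
  unfolding S_def HS_def by (rule rru_cong) (use H_read in auto)

lemma S_Suc: "S (Suc m) \<omega> = nxt qX qY (S m \<omega>) (U (Suc m) \<omega>) (V (Suc m) \<omega>) (W (Suc m) \<omega>)"
  unfolding S_def by (simp add: rru_Suc_nxt del: rru.simps(2))

lemma HS_meas: "n \<le> m \<Longrightarrow> HS n \<in> borel_measurable (PK m)"
proof (induction n)
  case 0 then show ?case by (simp add: HS_def)
next
  case (Suc n)
  then have [measurable]: "HS n \<in> borel_measurable (PK m)" by simp
  have [measurable]: "(\<lambda>p. ru p (Suc n)) \<in> borel_measurable (PK m)"
    "(\<lambda>p. rv p (Suc n)) \<in> borel_measurable (PK m)" "(\<lambda>p. rw p (Suc n)) \<in> borel_measurable (PK m)"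
    unfolding ru_def rv_def rw_def using Suc.prems
    by (auto intro!: comp_fst comp_snd simp: KK_def)
  have "HS (Suc n) = (\<lambda>p. nxt qX qY (HS n p) (ru p (Suc n)) (rv p (Suc n)) (rw p (Suc n)))"
    by (rule ext) (simp add: HS_def rru_Suc_nxt del: rru.simps(2))
  then show ?case by simp
qed

lemma S_meas[measurable]: "S n \<in> borel_measurable M"
proof -
  have "(\<lambda>\<omega>. HS n (H n \<omega>)) \<in> borel_measurable M"
    using measurable_compose[OF H_meas HS_meas[of n n]] by simp
  moreover have "(\<lambda>\<omega>. HS n (H n \<omega>)) = S n" using S_HS[of n n] by auto
  ultimately show ?thesis by simp
qed

lemma one_step:
  fixes f g :: "real \<Rightarrow> real"
  assumes z: "0 \<le> z" "z \<le> 1" and fm[measurable]: "f \<in> borel_measurable borel" and gm[measurable]: "g \<in> borel_measurable borel"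
    and fb: "\<And>v. \<bar>f v\<bar> \<le> C" and gb: "\<And>v. \<bar>g v\<bar> \<le> C"
  shows "(\<integral>\<omega>. (if U j \<omega> \<le> z then f (V j \<omega>) else g (W j \<omega>)) \<partial>M)
     = z * (\<integral>v. f v \<partial>uniform_measure lborel {0..1}) + (1 - z) * (\<integral>v. g v \<partial>uniform_measure lborel {0..1})"
proof -
  let ?I = "\<lambda>u. indicator {..z} u :: real"
  have im[measurable]: "?I \<in> borel_measurable borel" by simp
  have eq: "(\<lambda>\<omega>. if U j \<omega> \<le> z then f (V j \<omega>) else g (W j \<omega>))
      = (\<lambda>\<omega>. (?I (U j \<omega>) * f (V j \<omega>) + (g (W j \<omega>) - ?I (U j \<omega>) * g (W j \<omega>))))"
    by (auto simp: indicator_def)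
  have i1: "indep_var borel (\<lambda>\<omega>. ?I (U j \<omega>)) borel (\<lambda>\<omega>. f (V j \<omega>))"
    using indep_var_compose[OF indep_UV im fm] by (simp add: comp_def)
  have i2: "indep_var borel (\<lambda>\<omega>. ?I (U j \<omega>)) borel (\<lambda>\<omega>. g (W j \<omega>))"
    using indep_var_compose[OF indep_UW im gm] by (simp add: comp_def)
  have intI: "integrable M (\<lambda>\<omega>. ?I (U j \<omega>))"
    by (rule integrable_const_bound[where B=1]) auto
  have intf: "integrable M (\<lambda>\<omega>. f (V j \<omega>))"
    by (rule integrable_const_bound[where B=C]) (auto simp: fb)
  have intg: "integrable M (\<lambda>\<omega>. g (W j \<omega>))"
    by (rule integrable_const_bound[where B=C]) (auto simp: gb)
  have EI: "(\<integral>\<omega>. ?I (U j \<omega>) \<partial>M) = z"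
  proof -
    have "(\<integral>\<omega>. ?I (U j \<omega>) \<partial>M) = (\<integral>\<omega>. indicator {\<omega> \<in> space M. U j \<omega> \<le> z} \<omega> \<partial>M)"
      by (intro Bochner_Integration.integral_cong) (auto simp: indicator_def)
    also have "\<dots> = prob {\<omega> \<in> space M. U j \<omega> \<le> z}" by simp
    finally show ?thesis using probU[OF z] by simp
  qed
  have "(\<integral>\<omega>. (if U j \<omega> \<le> z then f (V j \<omega>) else g (W j \<omega>)) \<partial>M)
      = (\<integral>\<omega>. ?I (U j \<omega>) * f (V j \<omega>) \<partial>M) + ((\<integral>\<omega>. g (W j \<omega>) \<partial>M) - (\<integral>\<omega>. ?I (U j \<omega>) * g (W j \<omega>) \<partial>M))"
    unfolding eq using indep_var_integrable[OF i1 intI intf] indep_var_integrable[OF i2 intI intg] intg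
    by simp
  also have "\<dots> = z * (\<integral>\<omega>. f (V j \<omega>) \<partial>M) + ((\<integral>\<omega>. g (W j \<omega>) \<partial>M) - z * (\<integral>\<omega>. g (W j \<omega>) \<partial>M))"
    using indep_var_lebesgue_integral[OF i1 intI intf] indep_var_lebesgue_integral[OF i2 intI intg] EI by simp
  also have "\<dots> = z * (\<integral>v. f v \<partial>uniform_measure lborel {0..1}) + (1 - z) * (\<integral>v. g v \<partial>uniform_measure lborel {0..1})"
    using integral_unif(2)[OF fm, of j] integral_unif(3)[OF gm, of j] by (simp add: algebra_simps)
  finally show ?thesis .
qed

end

context proc begin

definition Ecnd :: "(real \<times> real \<Rightarrow> real \<times> real \<Rightarrow> real) \<Rightarrow> real \<times> real \<Rightarrow> real" where
  "Ecnd \<psi> s = fst s / (fst s + snd s) * (\<integral>v. \<psi> s (fst s + qX v, snd s) \<partial>uniform_measure lborel {0..1})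
     + (1 - fst s / (fst s + snd s)) * (\<integral>w. \<psi> s (fst s, snd s + qY w) \<partial>uniform_measure lborel {0..1})"

lemma z_range: "0 \<le> fst (rru qX qY x y u v w n) / (fst (rru qX qY x y u v w n) + snd (rru qX qY x y u v w n))
  \<and> fst (rru qX qY x y u v w n) / (fst (rru qX qY x y u v w n) + snd (rru qX qY x y u v w n)) \<le> 1"
  using inv_rru[of u v w n] xy by (auto simp: divide_simps)

lemma key:
  fixes \<Phi> :: "((nat + nat) \<Rightarrow> real \<times> real) \<Rightarrow> real" and \<psi> :: "real \<times> real \<Rightarrow> real \<times> real \<Rightarrow> real"
  assumes \<Phi>m[measurable]: "\<Phi> \<in> borel_measurable (PK m)" and \<Phi>b: "\<And>a. \<bar>\<Phi> a\<bar> \<le> C1"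
    and \<psi>m[measurable]: "case_prod \<psi> \<in> borel_measurable borel" and \<psi>b: "\<And>s t. \<bar>\<psi> s t\<bar> \<le> C2"
  shows "(\<integral>\<omega>. \<Phi> (H m \<omega>) * \<psi> (S m \<omega>) (S (Suc m) \<omega>) \<partial>M) = (\<integral>\<omega>. \<Phi> (H m \<omega>) * Ecnd \<psi> (S m \<omega>) \<partial>M)"
proof -
  define f where "f a b = \<Phi> a * \<psi> (HS m a) (nxt qX qY (HS m a) (fst (b (Inl (Suc m)))) (fst (b (Inr (Suc m)))) (snd (b (Inr (Suc m)))))" for a b
  have HSm[measurable]: "HS m \<in> borel_measurable (PK m)" by (rule HS_meas) simp
  have r1[measurable]: "(\<lambda>b. fst (b (Inl (Suc m)))) \<in> borel_measurable (PB m)"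
    by (rule comp_fst) (simp add: BB_def)
  have r2[measurable]: "(\<lambda>b. fst (b (Inr (Suc m)))) \<in> borel_measurable (PB m)"
    by (rule comp_fst) (simp add: BB_def)
  have r3[measurable]: "(\<lambda>b. snd (b (Inr (Suc m)))) \<in> borel_measurable (PB m)"
    by (rule comp_snd) (simp add: BB_def)
  have fm: "case_prod f \<in> borel_measurable (PK m \<Otimes>\<^sub>M PB m)"
  proof -
    have a1: "(\<lambda>p. \<Phi> (fst p)) \<in> borel_measurable (PK m \<Otimes>\<^sub>M PB m)" by measurable
    have a2: "(\<lambda>p. HS m (fst p)) \<in> borel_measurable (PK m \<Otimes>\<^sub>M PB m)" by measurable
    have a3: "(\<lambda>p. nxt qX qY (HS m (fst p)) (fst (snd p (Inl (Suc m)))) (fst (snd p (Inr (Suc m)))) (snd (snd p (Inr (Suc m)))))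
        \<in> borel_measurable (PK m \<Otimes>\<^sub>M PB m)"
      by (intro nxt_meas qXm qYm a2) measurable
    have a4: "(\<lambda>p. (HS m (fst p), nxt qX qY (HS m (fst p)) (fst (snd p (Inl (Suc m)))) (fst (snd p (Inr (Suc m)))) (snd (snd p (Inr (Suc m))))))
        \<in> borel_measurable (PK m \<Otimes>\<^sub>M PB m)"
      using a2 a3 by (rule borel_measurable_Pair)
    have a5: "(\<lambda>p. case_prod \<psi> (HS m (fst p), nxt qX qY (HS m (fst p)) (fst (snd p (Inl (Suc m)))) (fst (snd p (Inr (Suc m)))) (snd (snd p (Inr (Suc m))))))
        \<in> borel_measurable (PK m \<Otimes>\<^sub>M PB m)"
      using measurable_compose[OF a4 \<psi>m] by simp
    show ?thesis unfolding f_def split_beta using a1 a5 by simp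
  qed
  have fb: "\<bar>f a b\<bar> \<le> C1 * C2" for a b
    unfolding f_def abs_mult using \<Phi>b \<psi>b by (meson abs_ge_zero mult_mono order_trans)
  have "(\<integral>\<omega>. \<Phi> (H m \<omega>) * \<psi> (S m \<omega>) (S (Suc m) \<omega>) \<partial>M) = (\<integral>\<omega>. f (H m \<omega>) (G m \<omega>) \<partial>M)"
    by (intro Bochner_Integration.integral_cong refl)
       (simp add: f_def S_Suc G_U G_V G_W S_HS[of m m, symmetric])
  also have "\<dots> = (\<integral>\<omega>. (\<integral>\<omega>'. f (H m \<omega>) (G m \<omega>') \<partial>M) \<partial>M)"
    by (rule step[OF fm fb])
  also have "\<dots> = (\<integral>\<omega>. \<Phi> (H m \<omega>) * Ecnd \<psi> (S m \<omega>) \<partial>M)"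
  proof (intro Bochner_Integration.integral_cong refl)
    fix \<omega> assume "\<omega> \<in> space M"
    define a where "a = H m \<omega>"
    define s where "s = HS m a"
    have sS: "s = S m \<omega>" by (simp add: s_def a_def S_HS[of m m])
    define zz where "zz = fst s / (fst s + snd s)"
    have zr: "0 \<le> zz" "zz \<le> 1" using z_range unfolding zz_def s_def HS_def by auto
    have m1: "(\<lambda>v. \<psi> s (fst s + qX v, snd s)) \<in> borel_measurable borel"
    proof -
      have "(\<lambda>v. (s, (fst s + qX v, snd s))) \<in> borel_measurable borel" by measurable
      from measurable_compose[OF this \<psi>m] show ?thesis by simp
    qed
    have m2: "(\<lambda>v. \<psi> s (fst s, snd s + qY v)) \<in> borel_measurable borel"
    proof -
      have "(\<lambda>v. (s, (fst s, snd s + qY v))) \<in> borel_measurable borel" by measurable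
      from measurable_compose[OF this \<psi>m] show ?thesis by simp
    qed
    have "(\<integral>\<omega>'. f a (G m \<omega>') \<partial>M)
        = (\<integral>\<omega>'. \<Phi> a * (if U (Suc m) \<omega>' \<le> zz then \<psi> s (fst s + qX (V (Suc m) \<omega>'), snd s) else \<psi> s (fst s, snd s + qY (W (Suc m) \<omega>'))) \<partial>M)"
      by (intro Bochner_Integration.integral_cong refl) (simp add: f_def G_U G_V G_W s_def[symmetric] nxt_def zz_def)
    also have "\<dots> = \<Phi> a * (\<integral>\<omega>'. (if U (Suc m) \<omega>' \<le> zz then \<psi> s (fst s + qX (V (Suc m) \<omega>'), snd s) else \<psi> s (fst s, snd s + qY (W (Suc m) \<omega>'))) \<partial>M)"
      by simp
    also have "\<dots> = \<Phi> a * Ecnd \<psi> s"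
      by (subst one_step[OF zr m1 m2, where C=C2]) (auto simp: \<psi>b Ecnd_def zz_def)
    finally show "(\<integral>\<omega>'. f (H m \<omega>) (G m \<omega>') \<partial>M) = \<Phi> (H m \<omega>) * Ecnd \<psi> (S m \<omega>)"
      by (simp add: a_def sS)
  qed
  finally show ?thesis .
qed

end

lemma fst_bg[measurable]: "(fst :: 'a::second_countable_topology \<times> 'b::second_countable_topology \<Rightarrow> 'a) \<in> borel_measurable borel"
  using measurable_fst[of "borel::'a measure" "borel::'b measure"] by (simp add: borel_prod)
lemma snd_bg[measurable]: "(snd :: 'a::second_countable_topology \<times> 'b::second_countable_topology \<Rightarrow> 'b) \<in> borel_measurable borel"
  using measurable_snd[of "borel::'a measure" "borel::'b measure"] by (simp add: borel_prod)

lemma unif_meas_cong: "sets (uniform_measure lborel {0..1::real}) = sets borel" by simp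

context proc begin
lemma Ecnd_meas:
  assumes \<psi>m[measurable]: "case_prod \<psi> \<in> borel_measurable borel"
  shows "Ecnd \<psi> \<in> borel_measurable borel"
proof -
  interpret UU: prob_space "uniform_measure lborel {0..1::real}" by (rule unif_ps)
  have sp: "sets (borel \<Otimes>\<^sub>M uniform_measure lborel {0..1::real}) = sets (borel :: ((real \<times> real) \<times> real) measure)"
    by (simp add: borel_prod[symmetric] cong: sets_pair_measure_cong)
  have g1: "(\<lambda>p. \<psi> (fst p) (fst (fst p) + qX (snd p), snd (fst p))) \<in> borel_measurable (borel :: ((real \<times> real) \<times> real) measure)"
  proof -
    have "(\<lambda>p::(real\<times>real)\<times>real. (fst p, (fst (fst p) + qX (snd p), snd (fst p)))) \<in> borel_measurable borel" by measurable
    from measurable_compose[OF this \<psi>m] show ?thesis by simp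
  qed
  have g2: "(\<lambda>p. \<psi> (fst p) (fst (fst p), snd (fst p) + qY (snd p))) \<in> borel_measurable (borel :: ((real \<times> real) \<times> real) measure)"
  proof -
    have "(\<lambda>p::(real\<times>real)\<times>real. (fst p, (fst (fst p), snd (fst p) + qY (snd p)))) \<in> borel_measurable borel" by measurable
    from measurable_compose[OF this \<psi>m] show ?thesis by simp
  qed
  have i1: "(\<lambda>s. \<integral>v. \<psi> s (fst s + qX v, snd s) \<partial>uniform_measure lborel {0..1}) \<in> borel_measurable borel"
    by (rule UU.borel_measurable_lebesgue_integral) (use g1 in \<open>simp add: measurable_cong_sets[OF sp refl] split_beta\<close>)
  have i2: "(\<lambda>s. \<integral>v. \<psi> s (fst s, snd s + qY v) \<partial>uniform_measure lborel {0..1}) \<in> borel_measurable borel"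
    by (rule UU.borel_measurable_lebesgue_integral) (use g2 in \<open>simp add: measurable_cong_sets[OF sp refl] split_beta\<close>)
  show ?thesis unfolding Ecnd_def[abs_def] using i1 i2 by measurable
qed
end

locale mainl = noise M U V W for M :: "'a measure" and U V W +
  fixes \<mu> \<nu> :: "real measure" and \<beta> m0 x y :: real and n0 :: nat
  assumes inP: "in_P \<beta> m0 \<mu> \<nu>" and m0p: "0 < m0" and m0b: "m0 \<le> \<beta>"
    and x0: "0 \<le> x" and y0: "0 \<le> y" and n0: "1 \<le> n0" and xyn: "1 / real n0 \<le> x + y"

lemma (in mainl) qsm: "qsetup \<mu> \<beta>" and qsn: "qsetup \<nu> \<beta>"
  using inP by (auto simp: in_P_def qsetup_def)

lemma (in mainl) bpos: "0 < \<beta>" using m0p m0b by simp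

sublocale mainl \<subseteq> proc M U V W "qc \<beta> \<mu>" "qc \<beta> \<nu>" x y
proof
  show "qc \<beta> \<mu> \<in> borel_measurable borel" using qsetup.qc_meas[OF qsm] bpos by simp
  show "qc \<beta> \<nu> \<in> borel_measurable borel" using qsetup.qc_meas[OF qsn] bpos by simp
  show "0 \<le> qc \<beta> \<mu> v" for v using qsetup.qc_range[OF qsm] bpos by simp
  show "0 \<le> qc \<beta> \<nu> v" for v using qsetup.qc_range[OF qsn] bpos by simp
  show "0 \<le> x" "0 \<le> y" by (rule x0, rule y0)
  have "0 < 1 / real n0" using n0 by simp
  then show "0 < x + y" using xyn by linarith
qed

context mainl begin

abbreviation "unif \<equiv> uniform_measure lborel {0..1::real}"
abbreviation "qX \<equiv> qc \<beta> \<mu>"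
abbreviation "qY \<equiv> qc \<beta> \<nu>"

definition mm where "mm = (\<integral>k. k \<partial>\<mu>)"

lemma qX_r: "0 \<le> qX v \<and> qX v \<le> \<beta>" using qsetup.qc_range[OF qsm] bpos by simp
lemma qY_r: "0 \<le> qY v \<and> qY v \<le> \<beta>" using qsetup.qc_range[OF qsn] bpos by simp

lemma unif_int: "f \<in> borel_measurable borel \<Longrightarrow> (\<And>v. \<bar>f v\<bar> \<le> C) \<Longrightarrow> integrable unif (f :: real \<Rightarrow> real)"
  using finite_measure.integrable_const_bound[of unif f C] unif_ps
  by (auto simp: prob_space_def)

lemma unif_const: "(\<integral>v. c \<partial>unif) = (c::real)"
  using prob_space.prob_space[OF unif_ps] by simp

lemma mean_X: "(\<integral>v. qX v \<partial>unif) = mm"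
proof -
  have "(\<integral>k. k \<partial>\<mu>) = (\<integral>k. k \<partial>distr unif borel qX)"
    using qsetup.distr_qc[OF qsm] bpos by simp
  also have "\<dots> = (\<integral>v. qX v \<partial>unif)" by (subst integral_distr) auto
  finally show ?thesis by (simp add: mm_def)
qed

lemma mean_Y: "(\<integral>v. qY v \<partial>unif) = mm"
proof -
  have "(\<integral>k. k \<partial>\<nu>) = (\<integral>k. k \<partial>distr unif borel qY)"
    using qsetup.distr_qc[OF qsn] bpos by simp
  also have "\<dots> = (\<integral>v. qY v \<partial>unif)" by (subst integral_distr) auto
  finally show ?thesis using inP by (simp add: mm_def in_P_def)
qed

lemma mm_ge: "m0 \<le> mm" using inP by (simp add: mm_def in_P_def)

lemma mm_le: "mm \<le> \<beta>"
proof -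
  have "(\<integral>v. qX v \<partial>unif) \<le> (\<integral>v. \<beta> \<partial>unif)"
    by (intro integral_mono unif_int[where C=\<beta>]) (use qX_r bpos in auto)
  then show ?thesis by (simp add: mean_X unif_const)
qed

end

context proc begin
lemma sec_meas:
  assumes \<psi>m[measurable]: "case_prod \<psi> \<in> borel_measurable borel"
  shows "(\<lambda>v. \<psi> s (fst s + qX v, snd s)) \<in> borel_measurable borel"
    and "(\<lambda>v. \<psi> s (fst s, snd s + qY v)) \<in> borel_measurable borel"
proof -
  have "(\<lambda>v. (s, (fst s + qX v, snd s))) \<in> borel_measurable borel" by measurable
  from measurable_compose[OF this \<psi>m] show "(\<lambda>v. \<psi> s (fst s + qX v, snd s)) \<in> borel_measurable borel" by simp
  have "(\<lambda>v. (s, (fst s, snd s + qY v))) \<in> borel_measurable borel" by measurable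
  from measurable_compose[OF this \<psi>m] show "(\<lambda>v. \<psi> s (fst s, snd s + qY v)) \<in> borel_measurable borel" by simp
qed

definition isst :: "real \<times> real \<Rightarrow> bool" where
  "isst s \<longleftrightarrow> 0 \<le> fst s \<and> 0 \<le> snd s \<and> x + y \<le> fst s + snd s"

lemma S_st: "isst (S m \<omega>)" using inv_rru unfolding S_def isst_def by blast
lemma HS_st: "isst (HS m a)" using inv_rru unfolding HS_def isst_def by blast

lemma st_T: "isst s \<Longrightarrow> 0 < fst s + snd s" using xy by (auto simp: isst_def)
lemma st_z: "isst s \<Longrightarrow> 0 \<le> fst s / (fst s + snd s) \<and> fst s / (fst s + snd s) \<le> 1"
  using xy by (auto simp: isst_def divide_simps)

lemma int_bound_prob:
  fixes f :: "real \<Rightarrow> real"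
  assumes "f \<in> borel_measurable borel" "\<And>v. \<bar>f v\<bar> \<le> C"
  shows "\<bar>\<integral>v. f v \<partial>uniform_measure lborel {0..1}\<bar> \<le> C"
proof -
  interpret UU: prob_space "uniform_measure lborel {0..1::real}" by (rule unif_ps)
  have int: "integrable (uniform_measure lborel {0..1}) f"
    by (rule UU.integrable_const_bound[where B=C]) (use assms in auto)
  have "\<bar>\<integral>v. f v \<partial>uniform_measure lborel {0..1}\<bar> \<le> (\<integral>v. \<bar>f v\<bar> \<partial>uniform_measure lborel {0..1})"
    using integral_norm_bound[of _ f] by simp
  also have "\<dots> \<le> C"
    by (rule UU.integral_le_const) (use assms int in auto)
  finally show ?thesis .
qed

lemma Ecnd_bound:
  assumes \<psi>m: "case_prod \<psi> \<in> borel_measurable borel" and b: "\<And>s t. \<bar>\<psi> s t\<bar> \<le> C" and s: "isst s"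
  shows "\<bar>Ecnd \<psi> s\<bar> \<le> C"
proof -
  define z where "z = fst s / (fst s + snd s)"
  have z: "0 \<le> z" "z \<le> 1" using st_z[OF s] by (auto simp: z_def)
  define A where "A = (\<integral>v. \<psi> s (fst s + qX v, snd s) \<partial>uniform_measure lborel {0..1})"
  define B where "B = (\<integral>v. \<psi> s (fst s, snd s + qY v) \<partial>uniform_measure lborel {0..1})"
  have A: "\<bar>A\<bar> \<le> C" unfolding A_def by (rule int_bound_prob) (use sec_meas[OF \<psi>m] b in auto)
  have B: "\<bar>B\<bar> \<le> C" unfolding B_def by (rule int_bound_prob) (use sec_meas[OF \<psi>m] b in auto)
  have "\<bar>z * A + (1 - z) * B\<bar> \<le> z * \<bar>A\<bar> + (1 - z) * \<bar>B\<bar>"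
    using z by (simp add: abs_mult order_trans[OF abs_triangle_ineq])
  also have "\<dots> \<le> z * C + (1 - z) * C"
    using z A B by (intro add_mono mult_left_mono) auto
  finally show ?thesis by (simp add: Ecnd_def z_def A_def B_def algebra_simps)
qed

lemma integrable_bdd:
  fixes f :: "'a \<Rightarrow> real"
  shows "f \<in> borel_measurable M \<Longrightarrow> (\<And>\<omega>. \<bar>f \<omega>\<bar> \<le> C) \<Longrightarrow> integrable M f"
  by (rule integrable_const_bound[where B=C]) auto

end

context mainl begin

definition q0 where "q0 = 1 - m0 / (2 * \<beta>)"

lemma q0: "0 < q0" "q0 < 1"
  using m0p m0b bpos by (auto simp: q0_def field_simps)

lemma exp_pt: assumes "0 \<le> r" "r \<le> \<beta>" shows "exp (- r / \<beta>) \<le> 1 - r / (2 * \<beta>)"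
proof -
  define a where "a = r / \<beta>"
  have a: "0 \<le> a" "a \<le> 1" using assms bpos by (auto simp: a_def field_simps)
  have e: "1 + a + a\<^sup>2 / 2 \<le> exp a" by (rule exp_lower_Taylor_quadratic) (use a in simp)
  have "1 \<le> (1 - a/2) * (1 + a + a\<^sup>2 / 2)"
  proof -
    have "(1 - a/2) * (1 + a + a\<^sup>2 / 2) = 1 + a/2 - a^3/4" by (simp add: algebra_simps power2_eq_square power3_eq_cube divide_simps)
    moreover have "a^3 \<le> a" using a by (simp add: power_le_one mult_left_le_one_le power3_eq_cube mult_le_one)
    ultimately show ?thesis using a by simp
  qed
  also have "\<dots> \<le> (1 - a/2) * exp a" using a e by (intro mult_left_mono) auto
  finally have "exp (-a) \<le> 1 - a/2" by (simp add: exp_minus field_simps)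
  then show ?thesis using bpos by (simp add: a_def)
qed

lemma exp_int_gen:
  assumes m[measurable]: "q \<in> borel_measurable borel" and r: "\<And>v. 0 \<le> q v \<and> q v \<le> \<beta>" and mean: "(\<integral>v. q v \<partial>unif) = mm"
  shows "(\<integral>v. exp (- q v / \<beta>) \<partial>unif) \<le> q0"
proof -
  have iq: "integrable unif q" by (rule unif_int[where C=\<beta>]) (use r bpos in auto)
  have b1: "\<bar>1 - q v / (2 * \<beta>)\<bar> \<le> 1" for v using r[of v] bpos by (auto simp: abs_le_iff field_simps)
  have b2: "\<bar>exp (- q v / \<beta>)\<bar> \<le> 1" for v using r[of v] bpos by (auto intro: divide_nonpos_pos)
  have "(\<integral>v. exp (- q v / \<beta>) \<partial>unif) \<le> (\<integral>v. 1 - q v / (2 * \<beta>) \<partial>unif)"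
    by (intro integral_mono unif_int[where C=1] exp_pt b1 b2) (use r in auto)
  also have "\<dots> = (\<integral>v. 1 \<partial>unif) - (\<integral>v. q v / (2 * \<beta>) \<partial>unif)"
    by (rule Bochner_Integration.integral_diff) (auto intro!: iq integrable_divide_zero unif_int[where C=1])
  also have "\<dots> = 1 - mm / (2 * \<beta>)"
    by (simp add: unif_const mean integral_divide_zero)
  also have "\<dots> \<le> q0" using mm_ge bpos by (simp add: q0_def divide_right_mono)
  finally show ?thesis .
qed

lemma exp_intX: "(\<integral>v. exp (- qX v / \<beta>) \<partial>unif) \<le> q0"
  by (rule exp_int_gen) (use qX_r mean_X in auto)
lemma exp_intY: "(\<integral>v. exp (- qY v / \<beta>) \<partial>unif) \<le> q0"
  by (rule exp_int_gen) (use qY_r mean_Y in auto)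

definition psie :: "real \<times> real \<Rightarrow> real \<times> real \<Rightarrow> real" where
  "psie s t = min 1 (exp (- (fst t + snd t) / \<beta>))"

lemma psie_meas: "case_prod psie \<in> borel_measurable borel"
  unfolding psie_def[abs_def] split_beta by measurable

lemma psie_b: "\<bar>psie s t\<bar> \<le> 1" by (simp add: psie_def)

lemma ecnd_e: assumes s: "isst s" shows "Ecnd psie s \<le> q0 * exp (- (fst s + snd s) / \<beta>)"
proof -
  define z where "z = fst s / (fst s + snd s)"
  define T where "T = fst s + snd s"
  have z: "0 \<le> z" "z \<le> 1" using st_z[OF s] by (auto simp: z_def)
  have T: "0 \<le> T" using st_T[OF s] by (simp add: T_def)
  have eA: "(\<integral>v. psie s (fst s + qX v, snd s) \<partial>unif) = exp (- T / \<beta>) * (\<integral>v. exp (- qX v / \<beta>) \<partial>unif)"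
  proof -
    have "(\<integral>v. psie s (fst s + qX v, snd s) \<partial>unif) = (\<integral>v. exp (- T / \<beta>) * exp (- qX v / \<beta>) \<partial>unif)"
    proof (intro Bochner_Integration.integral_cong refl)
      fix v
      have "0 \<le> T + qX v" using T qX_r[of v] by simp
      then have "exp (- (T + qX v) / \<beta>) \<le> 1" using bpos by (auto intro: divide_nonpos_pos)
      then show "psie s (fst s + qX v, snd s) = exp (- T / \<beta>) * exp (- qX v / \<beta>)"
        by (simp add: psie_def T_def exp_add[symmetric] diff_divide_distrib add_divide_distrib algebra_simps min_def)
    qed
    then show ?thesis by simp
  qed
  have eB: "(\<integral>v. psie s (fst s, snd s + qY v) \<partial>unif) = exp (- T / \<beta>) * (\<integral>v. exp (- qY v / \<beta>) \<partial>unif)"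
  proof -
    have "(\<integral>v. psie s (fst s, snd s + qY v) \<partial>unif) = (\<integral>v. exp (- T / \<beta>) * exp (- qY v / \<beta>) \<partial>unif)"
    proof (intro Bochner_Integration.integral_cong refl)
      fix v
      have "0 \<le> T + qY v" using T qY_r[of v] by simp
      then have "exp (- (T + qY v) / \<beta>) \<le> 1" using bpos by (auto intro: divide_nonpos_pos)
      then show "psie s (fst s, snd s + qY v) = exp (- T / \<beta>) * exp (- qY v / \<beta>)"
        by (simp add: psie_def T_def exp_add[symmetric] diff_divide_distrib add_divide_distrib algebra_simps min_def)
    qed
    then show ?thesis by simp
  qed
  have "Ecnd psie s = z * (exp (- T / \<beta>) * (\<integral>v. exp (- qX v / \<beta>) \<partial>unif)) + (1 - z) * (exp (- T / \<beta>) * (\<integral>v. exp (- qY v / \<beta>) \<partial>unif))"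
    unfolding Ecnd_def eA eB z_def ..
  also have "\<dots> \<le> z * (exp (- T / \<beta>) * q0) + (1 - z) * (exp (- T / \<beta>) * q0)"
    using z exp_intX exp_intY by (intro add_mono mult_left_mono) auto
  finally show ?thesis by (simp add: T_def algebra_simps)
qed

lemma E_exp: "(\<integral>\<omega>. exp (- (fst (S k \<omega>) + snd (S k \<omega>)) / \<beta>) \<partial>M) \<le> q0 ^ k"
proof (induction k)
  case 0
  have "(\<integral>\<omega>. exp (- (fst (S 0 \<omega>) + snd (S 0 \<omega>)) / \<beta>) \<partial>M) = exp (- (x + y) / \<beta>)"
    by (simp add: S_def prob_space)
  also have "\<dots> \<le> 1" using x0 y0 bpos by (auto intro: divide_nonpos_pos)
  finally show ?case by simp
next
  case (Suc m)
  have em: "(\<lambda>\<omega>. exp (- (fst (S k \<omega>) + snd (S k \<omega>)) / \<beta>)) \<in> borel_measurable M" for k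
    by measurable
  have "(\<integral>\<omega>. exp (- (fst (S (Suc m) \<omega>) + snd (S (Suc m) \<omega>)) / \<beta>) \<partial>M)
      = (\<integral>\<omega>. (\<lambda>_. 1::real) (H m \<omega>) * psie (S m \<omega>) (S (Suc m) \<omega>) \<partial>M)"
  proof (intro Bochner_Integration.integral_cong refl)
    fix \<omega>
    have "0 \<le> fst (S (Suc m) \<omega>) + snd (S (Suc m) \<omega>)" using S_st[of "Suc m" \<omega>] by (simp add: isst_def)
    then have "exp (- (fst (S (Suc m) \<omega>) + snd (S (Suc m) \<omega>)) / \<beta>) \<le> 1"
      using bpos by (auto intro: divide_nonpos_pos)
    then show "exp (- (fst (S (Suc m) \<omega>) + snd (S (Suc m) \<omega>)) / \<beta>) = 1 * psie (S m \<omega>) (S (Suc m) \<omega>)"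
      by (simp add: psie_def min_def)
  qed
  also have "\<dots> = (\<integral>\<omega>. 1 * Ecnd psie (S m \<omega>) \<partial>M)"
    by (rule key[of "\<lambda>_. 1" m 1 psie 1]) (auto simp: psie_meas psie_b)
  also have "\<dots> \<le> (\<integral>\<omega>. q0 * exp (- (fst (S m \<omega>) + snd (S m \<omega>)) / \<beta>) \<partial>M)"
  proof (intro integral_mono)
    show "integrable M (\<lambda>\<omega>. 1 * Ecnd psie (S m \<omega>))"
      using Ecnd_bound[OF psie_meas psie_b S_st] measurable_compose[OF S_meas Ecnd_meas[OF psie_meas]]
      by (intro integrable_bdd[where C=1]) auto
    show "integrable M (\<lambda>\<omega>. q0 * exp (- (fst (S m \<omega>) + snd (S m \<omega>)) / \<beta>))"
    proof (rule integrable_bdd[where C=q0])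
      fix \<omega>
      have "0 \<le> fst (S m \<omega>) + snd (S m \<omega>)" using S_st[of m \<omega>] by (simp add: isst_def)
      then have "exp (- (fst (S m \<omega>) + snd (S m \<omega>)) / \<beta>) \<le> 1"
        using bpos by (auto intro: divide_nonpos_pos)
      then show "\<bar>q0 * exp (- (fst (S m \<omega>) + snd (S m \<omega>)) / \<beta>)\<bar> \<le> q0"
        using q0 by (simp add: abs_mult)
    qed measurable
    show "1 * Ecnd psie (S m \<omega>) \<le> q0 * exp (- (fst (S m \<omega>) + snd (S m \<omega>)) / \<beta>)" for \<omega>
      using ecnd_e[OF S_st] by simp
  qed
  also have "\<dots> = q0 * (\<integral>\<omega>. exp (- (fst (S m \<omega>) + snd (S m \<omega>)) / \<beta>) \<partial>M)" by simp
  also have "\<dots> \<le> q0 * q0 ^ m" using Suc q0 by (intro mult_left_mono) auto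
  finally show ?case by simp
qed

end

context mainl begin

definition c0 where "c0 = - ln q0 / 2"
definition r1 where "r1 = exp (- c0)"
definition cb :: "nat \<Rightarrow> real" where "cb k = 1 / (\<beta> * c0 * real k)\<^sup>2 + (real n0)\<^sup>2 * r1 ^ k"

lemma c0: "0 < c0" using q0 by (simp add: c0_def)
lemma r1: "0 < r1" "r1 < 1" using c0 by (auto simp: r1_def)
lemma q0_exp: "q0 = exp (- 2 * c0)" using q0 by (simp add: c0_def)

definition Tw :: "nat \<Rightarrow> 'a \<Rightarrow> real" where "Tw k \<omega> = fst (S k \<omega>) + snd (S k \<omega>)"

lemma Tw_meas[measurable]: "Tw k \<in> borel_measurable M" unfolding Tw_def[abs_def] by measurable

lemma Tw_ge: "1 / real n0 \<le> Tw k \<omega>" using S_st[of k \<omega>] xyn by (simp add: isst_def Tw_def)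
lemma n0pos: "0 < real n0" using n0 by simp
lemma Tw_pos: "0 < Tw k \<omega>" using Tw_ge[of k \<omega>] n0pos by (smt (verit) divide_pos_pos)

lemma inv2_le_n0: "1 / (Tw k \<omega>)\<^sup>2 \<le> (real n0)\<^sup>2"
proof -
  have "1 / Tw k \<omega> \<le> real n0" using Tw_ge[of k \<omega>] Tw_pos[of k \<omega>] n0pos by (simp add: field_simps)
  moreover have "0 \<le> 1 / Tw k \<omega>" using Tw_pos[of k \<omega>] by simp
  ultimately have "(1 / Tw k \<omega>)\<^sup>2 \<le> (real n0)\<^sup>2" by (rule power_mono)
  then show ?thesis by (simp add: power_divide)
qed

lemma inv2_int: "integrable M (\<lambda>\<omega>. 1 / (Tw k \<omega>)\<^sup>2)"
  by (rule integrable_bdd[where C="(real n0)\<^sup>2"]) (use inv2_le_n0 in auto)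

lemma E_inv2: assumes k: "1 \<le> k" shows "(\<integral>\<omega>. 1 / (Tw k \<omega>)\<^sup>2 \<partial>M) \<le> cb k"
proof -
  define L where "L = \<beta> * c0 * real k"
  have L: "0 < L" using bpos c0 k by (simp add: L_def)
  have pt: "1 / (Tw k \<omega>)\<^sup>2 \<le> 1 / L\<^sup>2 + (real n0)\<^sup>2 * exp (c0 * real k) * exp (- Tw k \<omega> / \<beta>)" for \<omega>
  proof (cases "L \<le> Tw k \<omega>")
    case True
    have "1 / (Tw k \<omega>)\<^sup>2 \<le> 1 / L\<^sup>2"
      using True L by (intro divide_left_mono power_mono) auto
    moreover have "0 \<le> (real n0)\<^sup>2 * exp (c0 * real k) * exp (- Tw k \<omega> / \<beta>)" by simp
    ultimately show ?thesis by linarith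
  next
    case False
    have "Tw k \<omega> / \<beta> \<le> c0 * real k" using False bpos by (simp add: L_def field_simps)
    then have "1 \<le> exp (c0 * real k) * exp (- Tw k \<omega> / \<beta>)"
      by (simp add: exp_add[symmetric])
    then have A: "(real n0)\<^sup>2 \<le> (real n0)\<^sup>2 * exp (c0 * real k) * exp (- Tw k \<omega> / \<beta>)"
      by (metis mult.assoc mult_left_mono mult_1_right zero_le_power2)
    have B: "0 \<le> 1 / L\<^sup>2" by simp
    show ?thesis using inv2_le_n0[of k \<omega>] A B by linarith
  qed
  have "(\<integral>\<omega>. 1 / (Tw k \<omega>)\<^sup>2 \<partial>M) \<le> (\<integral>\<omega>. 1 / L\<^sup>2 + (real n0)\<^sup>2 * exp (c0 * real k) * exp (- Tw k \<omega> / \<beta>) \<partial>M)"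
  proof (intro integral_mono inv2_int pt)
    show "integrable M (\<lambda>\<omega>. 1 / L\<^sup>2 + (real n0)\<^sup>2 * exp (c0 * real k) * exp (- Tw k \<omega> / \<beta>))"
    proof (rule integrable_bdd[where C="1 / L\<^sup>2 + (real n0)\<^sup>2 * exp (c0 * real k)"])
      fix \<omega>
      have "exp (- Tw k \<omega> / \<beta>) \<le> 1" using Tw_pos[of k \<omega>] bpos by (auto intro: divide_nonpos_pos)
      then have "(real n0)\<^sup>2 * exp (c0 * real k) * exp (- Tw k \<omega> / \<beta>) \<le> (real n0)\<^sup>2 * exp (c0 * real k)"
        by (intro mult_left_le) auto
      then show "\<bar>1 / L\<^sup>2 + (real n0)\<^sup>2 * exp (c0 * real k) * exp (- Tw k \<omega> / \<beta>)\<bar> \<le> 1 / L\<^sup>2 + (real n0)\<^sup>2 * exp (c0 * real k)"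
        by simp
    qed measurable
  qed
  also have "\<dots> = 1 / L\<^sup>2 + (real n0)\<^sup>2 * exp (c0 * real k) * (\<integral>\<omega>. exp (- Tw k \<omega> / \<beta>) \<partial>M)"
  proof -
    have ie: "integrable M (\<lambda>\<omega>. exp (- Tw k \<omega> / \<beta>))"
    proof (rule integrable_bdd[where C=1])
      fix \<omega> show "\<bar>exp (- Tw k \<omega> / \<beta>)\<bar> \<le> 1" using Tw_pos[of k \<omega>] bpos by (auto intro: divide_nonpos_pos)
    qed measurable
    then show ?thesis by (simp add: prob_space)
  qed
  also have "\<dots> \<le> 1 / L\<^sup>2 + (real n0)\<^sup>2 * exp (c0 * real k) * q0 ^ k"
    using E_exp[of k] by (intro add_left_mono mult_left_mono) (auto simp: Tw_def)
  also have "\<dots> = 1 / L\<^sup>2 + (real n0)\<^sup>2 * r1 ^ k"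
  proof -
    have "exp (c0 * real k) * q0 ^ k = r1 ^ k"
      by (simp add: q0_exp r1_def exp_of_nat_mult[symmetric] exp_add[symmetric] algebra_simps)
    then show ?thesis by (simp add: mult.assoc)
  qed
  finally show ?thesis by (simp add: cb_def L_def)
qed

lemma cb_nonneg: "0 \<le> cb k" using r1 by (simp add: cb_def)

lemma cb_summable: "summable cb"
proof -
  have s1: "summable (\<lambda>k. inverse (real k ^ 2))" by (rule inverse_power_summable) simp
  have F: "summable (\<lambda>k. (1 / (\<beta> * c0)\<^sup>2) * inverse (real k ^ 2))" by (rule summable_mult[OF s1])
  have E:  "(\<lambda>k. (1 / (\<beta> * c0)\<^sup>2) * inverse (real k ^ 2)) = (\<lambda>k. 1 / (\<beta> * c0 * real k)\<^sup>2)"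
    by (rule ext) (simp add: field_simps power_mult_distrib)
  have a: "summable (\<lambda>k. 1 / (\<beta> * c0 * real k)\<^sup>2)" using F unfolding E .
  have b: "summable (\<lambda>k. (real n0)\<^sup>2 * r1 ^ k)"
    by (rule summable_mult, rule summable_geometric) (use r1 in simp)
  show ?thesis unfolding cb_def[abs_def] by (rule summable_add[OF a b])
qed

end

context mainl begin

definition Zs :: "real \<times> real \<Rightarrow> real" where "Zs s = fst s / (fst s + snd s)"
definition psid :: "real \<times> real \<Rightarrow> real \<times> real \<Rightarrow> real" where
  "psid s t = max (-1) (min 1 (Zs t - Zs s))"
definition dd :: "real \<times> real \<Rightarrow> real" where "dd s = Ecnd psid s"

lemma psid_meas: "case_prod psid \<in> borel_measurable borel"
  unfolding psid_def[abs_def] Zs_def split_beta by measurable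
lemma psid_b: "\<bar>psid s t\<bar> \<le> 1" by (simp add: psid_def)
lemma dd_meas[measurable]: "dd \<in> borel_measurable borel"
  unfolding dd_def[abs_def] by (rule Ecnd_meas[OF psid_meas])
lemma dd_b: "isst s \<Longrightarrow> \<bar>dd s\<bar> \<le> 1"
  unfolding dd_def by (rule Ecnd_bound[OF psid_meas psid_b])

lemma psid_X:
  assumes s: "isst s" and r: "0 \<le> r"
  shows "psid s (fst s + r, snd s) = r * (1 - Zs s) / (fst s + snd s + r)"
    and "Zs (fst s + r, snd s) - Zs s = r * (1 - Zs s) / (fst s + snd s + r)"
proof -
  define X where "X = fst s" define Y where "Y = snd s"
  have T: "0 < X + Y" using st_T[OF s] by (simp add: X_def Y_def)
  have XY: "0 \<le> X" "0 \<le> Y" using s by (auto simp: isst_def X_def Y_def)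
  have e: "Zs (X + r, Y) - Zs (X, Y) = r * (1 - Zs (X, Y)) / (X + Y + r)"
    using T r by (simp add: Zs_def field_simps)
  have b1: "0 \<le> r * (1 - Zs (X, Y)) / (X + Y + r)"
    using T r XY by (intro divide_nonneg_pos mult_nonneg_nonneg) (auto simp: Zs_def divide_simps)
  have b2: "r * (1 - Zs (X, Y)) / (X + Y + r) \<le> 1"
  proof -
    have "r * (1 - Zs (X, Y)) \<le> r * 1" using r T XY by (intro mult_left_mono) (auto simp: Zs_def)
    also have "\<dots> \<le> X + Y + r" using T by simp
    finally show ?thesis using T r by (simp add: divide_simps)
  qed
  show "psid s (fst s + r, snd s) = r * (1 - Zs s) / (fst s + snd s + r)"
    using e b1 b2 by (simp add: psid_def X_def Y_def)
  show "Zs (fst s + r, snd s) - Zs s = r * (1 - Zs s) / (fst s + snd s + r)"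
    using e by (simp add: X_def Y_def)
qed

lemma psid_Y:
  assumes s: "isst s" and r: "0 \<le> r"
  shows "psid s (fst s, snd s + r) = - (Zs s * r / (fst s + snd s + r))"
    and "Zs (fst s, snd s + r) - Zs s = - (Zs s * r / (fst s + snd s + r))"
proof -
  define X where "X = fst s" define Y where "Y = snd s"
  have T: "0 < X + Y" using st_T[OF s] by (simp add: X_def Y_def)
  have XY: "0 \<le> X" "0 \<le> Y" using s by (auto simp: isst_def X_def Y_def)
  have z: "0 \<le> Zs (X, Y)" "Zs (X, Y) \<le> 1" using st_z[OF s] by (auto simp: Zs_def X_def Y_def)
  have e: "Zs (X, Y + r) - Zs (X, Y) = - (Zs (X, Y) * r / (X + Y + r))"
    using T r by (simp add: Zs_def field_simps)
  have b1: "0 \<le> Zs (X, Y) * r / (X + Y + r)"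
    using T r z by (intro divide_nonneg_pos mult_nonneg_nonneg) auto
  have b2: "Zs (X, Y) * r / (X + Y + r) \<le> 1"
  proof -
    have "Zs (X, Y) * r \<le> 1 * r" using r z by (intro mult_right_mono) auto
    also have "\<dots> \<le> X + Y + r" using T by simp
    finally show ?thesis using T r by (simp add: divide_simps)
  qed
  show "psid s (fst s, snd s + r) = - (Zs s * r / (fst s + snd s + r))"
    using e b1 b2 by (simp add: psid_def X_def Y_def)
  show "Zs (fst s, snd s + r) - Zs s = - (Zs s * r / (fst s + snd s + r))"
    using e by (simp add: X_def Y_def)
qed

lemma frac_bounds:
  assumes T: "0 < T" and r: "0 \<le> r" "r \<le> \<beta>"
  shows "r / T - \<beta> * r / T\<^sup>2 \<le> r / (T + r)" and "r / (T + r) \<le> r / T"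
proof -
  have "r / T - r / (T + r) = r * r / (T * (T + r))" using T r by (simp add: field_simps)
  also have "\<dots> \<le> \<beta> * r / T\<^sup>2"
  proof -
    have "r * r / (T * (T + r)) \<le> r * r / (T * T)"
      using T r by (intro divide_left_mono mult_left_mono mult_pos_pos) auto
    also have "\<dots> \<le> \<beta> * r / (T * T)" using r T by (intro divide_right_mono mult_right_mono) auto
    finally show ?thesis by (simp add: power2_eq_square)
  qed
  finally show "r / T - \<beta> * r / T\<^sup>2 \<le> r / (T + r)" by simp
  show "r / (T + r) \<le> r / T" using T r by (intro divide_left_mono) auto
qed

lemma A_bounds:
  assumes m[measurable]: "q \<in> borel_measurable borel" and r: "\<And>v. 0 \<le> q v \<and> q v \<le> \<beta>"
    and mean: "(\<integral>v. q v \<partial>unif) = mm" and T: "0 < T"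
  shows "mm / T - \<beta> * mm / T\<^sup>2 \<le> (\<integral>v. q v / (T + q v) \<partial>unif)"
    and "(\<integral>v. q v / (T + q v) \<partial>unif) \<le> mm / T"
    and "0 \<le> (\<integral>v. q v / (T + q v) \<partial>unif)"
proof -
  have iq: "integrable unif q" by (rule unif_int[where C=\<beta>]) (use r bpos in auto)
  have bd: "\<bar>q v / (T + q v)\<bar> \<le> 1" for v
    using r[of v] T by (auto simp: divide_simps)
  have ia: "integrable unif (\<lambda>v. q v / (T + q v))" by (rule unif_int[where C=1]) (use bd in auto)
  have "(\<integral>v. q v / T - \<beta> * q v / T\<^sup>2 \<partial>unif) \<le> (\<integral>v. q v / (T + q v) \<partial>unif)"
    by (intro integral_mono ia Bochner_Integration.integrable_diff integrable_divide_zero integrable_mult_right iq frac_bounds T) (use r in auto)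
  moreover have "(\<integral>v. q v / T - \<beta> * q v / T\<^sup>2 \<partial>unif) = mm / T - \<beta> * mm / T\<^sup>2"
    using iq by (simp add: Bochner_Integration.integral_diff integrable_divide_zero integral_divide_zero mean)
  ultimately show "mm / T - \<beta> * mm / T\<^sup>2 \<le> (\<integral>v. q v / (T + q v) \<partial>unif)" by simp
  have "(\<integral>v. q v / (T + q v) \<partial>unif) \<le> (\<integral>v. q v / T \<partial>unif)"
    by (intro integral_mono ia integrable_divide_zero iq frac_bounds T) (use r in auto)
  then show "(\<integral>v. q v / (T + q v) \<partial>unif) \<le> mm / T" by (simp add: integral_divide_zero mean)
  show "0 \<le> (\<integral>v. q v / (T + q v) \<partial>unif)"
    by (intro integral_nonneg_AE AE_I2) (use r T in \<open>auto intro: divide_nonneg_pos add_pos_nonneg\<close>)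
qed

lemma dd_formula:
  assumes s: "isst s"
  shows "dd s = Zs s * (1 - Zs s) * ((\<integral>v. qX v / (fst s + snd s + qX v) \<partial>unif) - (\<integral>v. qY v / (fst s + snd s + qY v) \<partial>unif))"
proof -
  have "(\<integral>v. psid s (fst s + qX v, snd s) \<partial>unif) = (\<integral>v. (1 - Zs s) * (qX v / (fst s + snd s + qX v)) \<partial>unif)"
    by (intro Bochner_Integration.integral_cong refl) (simp add: psid_X(1)[OF s] qX_r)
  also have "\<dots> = (1 - Zs s) * (\<integral>v. qX v / (fst s + snd s + qX v) \<partial>unif)" by (rule integral_mult_right_zero)
  finally have a: "(\<integral>v. psid s (fst s + qX v, snd s) \<partial>unif) = (1 - Zs s) * (\<integral>v. qX v / (fst s + snd s + qX v) \<partial>unif)" .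
  have "(\<integral>v. psid s (fst s, snd s + qY v) \<partial>unif) = (\<integral>v. - Zs s * (qY v / (fst s + snd s + qY v)) \<partial>unif)"
    by (intro Bochner_Integration.integral_cong refl) (simp add: psid_Y(1)[OF s] qY_r)
  also have "\<dots> = - Zs s * (\<integral>v. qY v / (fst s + snd s + qY v) \<partial>unif)" by (rule integral_mult_right_zero)
  finally have b: "(\<integral>v. psid s (fst s, snd s + qY v) \<partial>unif) = - Zs s * (\<integral>v. qY v / (fst s + snd s + qY v) \<partial>unif)" .
  have zz: "fst s / (fst s + snd s) = Zs s" by (simp add: Zs_def)
  show ?thesis unfolding dd_def Ecnd_def a b zz by (simp add: algebra_simps)
qed

lemma dd_bounds:
  assumes s: "isst s"
  shows "\<bar>dd s\<bar> \<le> \<beta>\<^sup>2 / (fst s + snd s)\<^sup>2" and "\<bar>dd s\<bar> \<le> \<beta> / (fst s + snd s)"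
proof -
  define T where "T = fst s + snd s"
  have T: "0 < T" using st_T[OF s] by (simp add: T_def)
  define A where "A = (\<integral>v. qX v / (T + qX v) \<partial>unif)"
  define B where "B = (\<integral>v. qY v / (T + qY v) \<partial>unif)"
  have A: "mm / T - \<beta> * mm / T\<^sup>2 \<le> A" "A \<le> mm / T" "0 \<le> A"
    unfolding A_def using A_bounds[OF _ _ mean_X T] qX_r by auto
  have B: "mm / T - \<beta> * mm / T\<^sup>2 \<le> B" "B \<le> mm / T" "0 \<le> B"
    unfolding B_def using A_bounds[OF _ _ mean_Y T] qY_r by auto
  have z: "0 \<le> Zs s" "Zs s \<le> 1" using st_z[OF s] by (auto simp: Zs_def)
  have zz: "0 \<le> Zs s * (1 - Zs s)" "Zs s * (1 - Zs s) \<le> 1" using z by (auto intro: mult_le_one)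
  have d: "dd s = Zs s * (1 - Zs s) * (A - B)" using dd_formula[OF s] by (simp add: A_def B_def T_def)
  have "\<bar>dd s\<bar> \<le> \<bar>A - B\<bar>" unfolding d abs_mult using zz
    by (simp add: mult_left_le_one_le)
  moreover have "\<bar>A - B\<bar> \<le> \<beta> * mm / T\<^sup>2" using A B by linarith
  moreover have "\<beta> * mm / T\<^sup>2 \<le> \<beta>\<^sup>2 / T\<^sup>2"
    using mm_le bpos T by (intro divide_right_mono) (auto simp: power2_eq_square)
  ultimately show "\<bar>dd s\<bar> \<le> \<beta>\<^sup>2 / (fst s + snd s)\<^sup>2" by (simp add: T_def)
  have "\<bar>A - B\<bar> \<le> mm / T" using A B by linarith
  moreover have "mm / T \<le> \<beta> / T" using mm_le T by (intro divide_right_mono) auto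
  ultimately show "\<bar>dd s\<bar> \<le> \<beta> / (fst s + snd s)" using \<open>\<bar>dd s\<bar> \<le> \<bar>A - B\<bar>\<close> by (simp add: T_def)
qed

lemma psid_nxt:
  assumes s: "isst s"
  shows "psid s (nxt qX qY s u v w) = Zs (nxt qX qY s u v w) - Zs s"
    and "\<bar>psid s (nxt qX qY s u v w)\<bar> \<le> \<beta> / (fst s + snd s)"
proof -
  have T: "0 < fst s + snd s" using st_T[OF s] .
  have z: "0 \<le> Zs s" "Zs s \<le> 1" using st_z[OF s] by (auto simp: Zs_def)
  show "psid s (nxt qX qY s u v w) = Zs (nxt qX qY s u v w) - Zs s"
    using psid_X[OF s, of "qX v"] psid_Y[OF s, of "qY w"] qX_r qY_r by (auto simp: nxt_def)
  have bX: "r * (1 - Zs s) / (fst s + snd s + r) \<le> \<beta> / (fst s + snd s)" if r: "0 \<le> r" "r \<le> \<beta>" for r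
  proof -
    have "r * (1 - Zs s) / (fst s + snd s + r) \<le> r / (fst s + snd s + r)"
      using z r T by (intro divide_right_mono) (auto simp: mult_left_le)
    also have "\<dots> \<le> r / (fst s + snd s)" using T r by (intro divide_left_mono) auto
    also have "\<dots> \<le> \<beta> / (fst s + snd s)" using T r by (intro divide_right_mono) auto
    finally show ?thesis .
  qed
  have bY: "Zs s * r / (fst s + snd s + r) \<le> \<beta> / (fst s + snd s)" if r: "0 \<le> r" "r \<le> \<beta>" for r
  proof -
    have "Zs s * r / (fst s + snd s + r) \<le> r / (fst s + snd s + r)"
      using z r T by (intro divide_right_mono) (auto simp: mult_left_le_one_le)
    also have "\<dots> \<le> r / (fst s + snd s)" using T r by (intro divide_left_mono) auto
    also have "\<dots> \<le> \<beta> / (fst s + snd s)" using T r by (intro divide_right_mono) auto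
    finally show ?thesis .
  qed
  have nX: "0 \<le> r * (1 - Zs s) / (fst s + snd s + r)" if "0 \<le> r" for r
    using that z T by (intro divide_nonneg_pos mult_nonneg_nonneg) auto
  have nY: "0 \<le> Zs s * r / (fst s + snd s + r)" if "0 \<le> r" for r
    using that z T by (intro divide_nonneg_pos mult_nonneg_nonneg) auto
  show "\<bar>psid s (nxt qX qY s u v w)\<bar> \<le> \<beta> / (fst s + snd s)"
  proof (cases "u \<le> fst s / (fst s + snd s)")
    case True
    then have e: "psid s (nxt qX qY s u v w) = qX v * (1 - Zs s) / (fst s + snd s + qX v)"
      using psid_X(1)[OF s, of "qX v"] qX_r[of v] by (simp add: nxt_def)
    have "\<bar>psid s (nxt qX qY s u v w)\<bar> = qX v * (1 - Zs s) / (fst s + snd s + qX v)"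
      unfolding e by (rule abs_of_nonneg[OF nX]) (use qX_r in auto)
    then show ?thesis using bX[of "qX v"] qX_r[of v] by simp
  next
    case False
    then have e: "psid s (nxt qX qY s u v w) = - (Zs s * qY w / (fst s + snd s + qY w))"
      using psid_Y(1)[OF s, of "qY w"] qY_r[of w] by (simp add: nxt_def)
    have "\<bar>psid s (nxt qX qY s u v w)\<bar> = Zs s * qY w / (fst s + snd s + qY w)"
      unfolding e abs_minus_cancel by (rule abs_of_nonneg[OF nY]) (use qY_r in auto)
    then show ?thesis using bY[of "qY w"] qY_r[of w] by simp
  qed
qed

end

context prob_space begin
lemma E_abs_sqrt:
  fixes f :: "'a \<Rightarrow> real"
  assumes "integrable M f" "integrable M (\<lambda>x. (f x)\<^sup>2)"
  shows "(\<integral>x. \<bar>f x\<bar> \<partial>M) \<le> sqrt (\<integral>x. (f x)\<^sup>2 \<partial>M)"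
proof -
  have i1: "integrable M (\<lambda>x. \<bar>f x\<bar>)" using assms by auto
  have i2: "integrable M (\<lambda>x. (\<bar>f x\<bar>)\<^sup>2)" using assms by simp
  have "0 \<le> (\<integral>x. (\<bar>f x\<bar>)\<^sup>2 \<partial>M) - (\<integral>x. \<bar>f x\<bar> \<partial>M)\<^sup>2"
    using variance_positive[of "\<lambda>x. \<bar>f x\<bar>"] variance_eq[OF i1 i2] by simp
  then have "(\<integral>x. \<bar>f x\<bar> \<partial>M)\<^sup>2 \<le> (\<integral>x. (f x)\<^sup>2 \<partial>M)" by simp
  then show ?thesis using real_le_rsqrt by blast
qed
end

context mainl begin

definition eps :: "nat \<Rightarrow> 'a \<Rightarrow> real" where "eps k \<omega> = psid (S k \<omega>) (S (Suc k) \<omega>) - dd (S k \<omega>)"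
definition Mart :: "nat \<Rightarrow> nat \<Rightarrow> 'a \<Rightarrow> real" where "Mart n m \<omega> = (\<Sum>k\<in>{n..<m}. eps k \<omega>)"
definition epsH where "epsH k a = psid (HS k a) (HS (Suc k) a) - dd (HS k a)"
definition MartH where "MartH n m a = (\<Sum>k\<in>{n..<m}. epsH k a)"

lemma psid_comp_meas:
  assumes "f \<in> borel_measurable N" "g \<in> borel_measurable N"
  shows "(\<lambda>a. psid (f a) (g a)) \<in> borel_measurable N"
proof -
  have "(\<lambda>a. (f a, g a)) \<in> borel_measurable N" using assms by measurable
  from measurable_compose[OF this psid_meas] show ?thesis by simp
qed

lemma eps_meas[measurable]: "eps k \<in> borel_measurable M"
  unfolding eps_def[abs_def] by (intro borel_measurable_diff psid_comp_meas) measurable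

lemma Mart_meas[measurable]: "Mart n m \<in> borel_measurable M"
  unfolding Mart_def[abs_def] by measurable

lemma MartH_meas: "MartH n m \<in> borel_measurable (PK m)"
proof -
  have "epsH k \<in> borel_measurable (PK m)" if "k < m" for k
  proof -
    have [measurable]: "HS k \<in> borel_measurable (PK m)" "HS (Suc k) \<in> borel_measurable (PK m)"
      using HS_meas that by auto
    show ?thesis unfolding epsH_def[abs_def]
      by (intro borel_measurable_diff psid_comp_meas) measurable
  qed
  then show ?thesis unfolding MartH_def[abs_def] by (intro borel_measurable_sum) auto
qed

lemma Mart_H: "Mart n m \<omega> = MartH n m (H m \<omega>)"
  unfolding Mart_def MartH_def eps_def epsH_def
  by (intro sum.cong refl) (simp add: S_HS[of _ m])

lemma epsH_b: "\<bar>epsH k a\<bar> \<le> 2"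
  using psid_b[of "HS k a" "HS (Suc k) a"] dd_b[OF HS_st, of k a] by (simp add: epsH_def)

lemma MartH_b: "\<bar>MartH n m a\<bar> \<le> 2 * real m"
proof -
  have "\<bar>MartH n m a\<bar> \<le> (\<Sum>k\<in>{n..<m}. \<bar>epsH k a\<bar>)" unfolding MartH_def by (rule sum_abs)
  also have "\<dots> \<le> real (card {n..<m}) * 2" by (rule sum_bounded_above) (rule epsH_b)
  also have "\<dots> \<le> 2 * real m" by simp
  finally show ?thesis .
qed

lemma Mart_b: "\<bar>Mart n m \<omega>\<bar> \<le> 2 * real m" unfolding Mart_H by (rule MartH_b)

lemma eps_b: "\<bar>eps k \<omega>\<bar> \<le> 2 * \<beta> / Tw k \<omega>"
proof -
  have a: "\<bar>psid (S k \<omega>) (S (Suc k) \<omega>)\<bar> \<le> \<beta> / Tw k \<omega>"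
    unfolding S_Suc Tw_def by (rule psid_nxt(2)[OF S_st])
  have b: "\<bar>dd (S k \<omega>)\<bar> \<le> \<beta> / Tw k \<omega>" unfolding Tw_def by (rule dd_bounds(2)[OF S_st])
  show ?thesis using a b by (simp add: eps_def)
qed

lemma eps_b2: "\<bar>eps k \<omega>\<bar> \<le> 2"
  using psid_b[of "S k \<omega>" "S (Suc k) \<omega>"] dd_b[OF S_st, of k \<omega>] by (simp add: eps_def)

lemma eps_sq: "(eps k \<omega>)\<^sup>2 \<le> 4 * \<beta>\<^sup>2 * (1 / (Tw k \<omega>)\<^sup>2)"
proof -
  have "(eps k \<omega>)\<^sup>2 = \<bar>eps k \<omega>\<bar>\<^sup>2" by simp
  also have "\<dots> \<le> (2 * \<beta> / Tw k \<omega>)\<^sup>2" by (rule power_mono[OF eps_b]) simp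
  finally show ?thesis by (simp add: power_divide power_mult_distrib)
qed

lemma orth: "(\<integral>\<omega>. Mart n m \<omega> * eps m \<omega> \<partial>M) = 0"
proof -
  have i1: "integrable M (\<lambda>\<omega>. Mart n m \<omega> * psid (S m \<omega>) (S (Suc m) \<omega>))"
  proof (rule integrable_bdd[where C="2 * real m"])
    show "(\<lambda>\<omega>. Mart n m \<omega> * psid (S m \<omega>) (S (Suc m) \<omega>)) \<in> borel_measurable M"
      by (intro borel_measurable_times Mart_meas psid_comp_meas) measurable
    fix \<omega> show "\<bar>Mart n m \<omega> * psid (S m \<omega>) (S (Suc m) \<omega>)\<bar> \<le> 2 * real m"
      unfolding abs_mult using mult_mono[OF Mart_b[of n m \<omega>] psid_b[of "S m \<omega>" "S (Suc m) \<omega>"]] by simp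
  qed
  have i2: "integrable M (\<lambda>\<omega>. Mart n m \<omega> * dd (S m \<omega>))"
  proof (rule integrable_bdd[where C="2 * real m"])
    show "(\<lambda>\<omega>. Mart n m \<omega> * dd (S m \<omega>)) \<in> borel_measurable M" by measurable
    fix \<omega> show "\<bar>Mart n m \<omega> * dd (S m \<omega>)\<bar> \<le> 2 * real m"
      unfolding abs_mult using mult_mono[OF Mart_b[of n m \<omega>] dd_b[OF S_st, of m \<omega>]] by simp
  qed
  have "(\<integral>\<omega>. Mart n m \<omega> * psid (S m \<omega>) (S (Suc m) \<omega>) \<partial>M) = (\<integral>\<omega>. MartH n m (H m \<omega>) * psid (S m \<omega>) (S (Suc m) \<omega>) \<partial>M)"
    by (simp add: Mart_H)
  also have "\<dots> = (\<integral>\<omega>. MartH n m (H m \<omega>) * Ecnd psid (S m \<omega>) \<partial>M)"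
    by (rule key[OF MartH_meas MartH_b psid_meas psid_b])
  also have "\<dots> = (\<integral>\<omega>. Mart n m \<omega> * dd (S m \<omega>) \<partial>M)" by (simp add: Mart_H dd_def)
  finally have e: "(\<integral>\<omega>. Mart n m \<omega> * psid (S m \<omega>) (S (Suc m) \<omega>) \<partial>M) = (\<integral>\<omega>. Mart n m \<omega> * dd (S m \<omega>) \<partial>M)" .
  have "(\<integral>\<omega>. Mart n m \<omega> * eps m \<omega> \<partial>M) = (\<integral>\<omega>. Mart n m \<omega> * psid (S m \<omega>) (S (Suc m) \<omega>) - Mart n m \<omega> * dd (S m \<omega>) \<partial>M)"
    by (simp add: eps_def algebra_simps)
  also have "\<dots> = 0" using e i1 i2 by simp
  finally show ?thesis .
qed

lemma Mart_sq: assumes "n \<le> m"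
  shows "(\<integral>\<omega>. (Mart n m \<omega>)\<^sup>2 \<partial>M) \<le> 4 * \<beta>\<^sup>2 * (\<Sum>k\<in>{n..<m}. \<integral>\<omega>. 1 / (Tw k \<omega>)\<^sup>2 \<partial>M)"
  using assms
proof (induction m rule: nat_induct_at_least)
  case base then show ?case by (simp add: Mart_def)
next
  case (Suc m)
  have ms: "Mart n (Suc m) \<omega> = Mart n m \<omega> + eps m \<omega>" for \<omega>
    using Suc.hyps by (simp add: Mart_def)
  have iM2: "integrable M (\<lambda>\<omega>. (Mart n m \<omega>)\<^sup>2)"
  proof (rule integrable_bdd[where C="(2 * real m)\<^sup>2"])
    fix \<omega>
    have "\<bar>Mart n m \<omega>\<bar>\<^sup>2 \<le> (2 * real m)\<^sup>2" by (rule power_mono[OF Mart_b abs_ge_zero])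
    then show "\<bar>(Mart n m \<omega>)\<^sup>2\<bar> \<le> (2 * real m)\<^sup>2" by simp
  qed measurable
  have iME: "integrable M (\<lambda>\<omega>. 2 * (Mart n m \<omega> * eps m \<omega>))"
  proof (rule integrable_bdd[where C="2 * (2 * real m * 2)"])
    fix \<omega>
    have "\<bar>Mart n m \<omega>\<bar> * \<bar>eps m \<omega>\<bar> \<le> 2 * real m * 2" by (rule mult_mono[OF Mart_b eps_b2]) auto
    then show "\<bar>2 * (Mart n m \<omega> * eps m \<omega>)\<bar> \<le> 2 * (2 * real m * 2)" by (simp add: abs_mult mult.commute)
  qed measurable
  have iE2: "integrable M (\<lambda>\<omega>. (eps m \<omega>)\<^sup>2)"
  proof (rule integrable_bdd[where C="2\<^sup>2"])
    fix \<omega>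
    have "\<bar>eps m \<omega>\<bar>\<^sup>2 \<le> 2\<^sup>2" by (rule power_mono[OF eps_b2 abs_ge_zero])
    then show "\<bar>(eps m \<omega>)\<^sup>2\<bar> \<le> 2\<^sup>2" by simp
  qed measurable
  have "(\<integral>\<omega>. (Mart n (Suc m) \<omega>)\<^sup>2 \<partial>M) = (\<integral>\<omega>. (Mart n m \<omega>)\<^sup>2 + 2 * (Mart n m \<omega> * eps m \<omega>) + (eps m \<omega>)\<^sup>2 \<partial>M)"
    by (simp add: ms power2_sum algebra_simps)
  also have "\<dots> = (\<integral>\<omega>. (Mart n m \<omega>)\<^sup>2 \<partial>M) + 2 * (\<integral>\<omega>. Mart n m \<omega> * eps m \<omega> \<partial>M) + (\<integral>\<omega>. (eps m \<omega>)\<^sup>2 \<partial>M)"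
    using iM2 iME iE2 by simp
  also have "\<dots> = (\<integral>\<omega>. (Mart n m \<omega>)\<^sup>2 \<partial>M) + (\<integral>\<omega>. (eps m \<omega>)\<^sup>2 \<partial>M)" by (simp add: orth)
  also have "(\<integral>\<omega>. (eps m \<omega>)\<^sup>2 \<partial>M) \<le> (\<integral>\<omega>. 4 * \<beta>\<^sup>2 * (1 / (Tw m \<omega>)\<^sup>2) \<partial>M)"
    by (intro integral_mono iE2 eps_sq integrable_mult_right inv2_int)
  also have "\<dots> = 4 * \<beta>\<^sup>2 * (\<integral>\<omega>. 1 / (Tw m \<omega>)\<^sup>2 \<partial>M)" by (rule integral_mult_right_zero)
  finally show ?case using Suc.IH Suc.hyps by (simp add: algebra_simps)
qed

end

context mainl begin

lemma Zs_r: "0 \<le> Zs (S k \<omega>) \<and> Zs (S k \<omega>) \<le> 1" using st_z[OF S_st] by (simp add: Zs_def)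

lemma Zs_meas[measurable]: "(\<lambda>\<omega>. Zs (S k \<omega>)) \<in> borel_measurable M"
  unfolding Zs_def by measurable

lemma Zs_diff: "\<bar>Zs (S m \<omega>) - Zs (S n \<omega>)\<bar> \<le> 1"
  using Zs_r[of m \<omega>] Zs_r[of n \<omega>] by (simp add: abs_le_iff)

lemma decomp: assumes "n \<le> m"
  shows "Zs (S m \<omega>) - Zs (S n \<omega>) = (\<Sum>k\<in>{n..<m}. dd (S k \<omega>)) + Mart n m \<omega>"
proof -
  have "Zs (S m \<omega>) - Zs (S n \<omega>) = (\<Sum>k\<in>{n..<m}. Zs (S (Suc k) \<omega>) - Zs (S k \<omega>))"
    using sum_Suc_diff'[OF assms, of "\<lambda>k. Zs (S k \<omega>)"] by simp
  also have "\<dots> = (\<Sum>k\<in>{n..<m}. dd (S k \<omega>) + eps k \<omega>)"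
    by (intro sum.cong refl) (simp add: eps_def S_Suc psid_nxt(1)[OF S_st])
  also have "\<dots> = (\<Sum>k\<in>{n..<m}. dd (S k \<omega>)) + Mart n m \<omega>"
    by (simp add: Mart_def sum.distrib)
  finally show ?thesis .
qed

lemma main_bound: assumes n: "1 \<le> n" and nm: "n \<le> m"
  shows "(\<integral>\<omega>. \<bar>Zs (S m \<omega>) - Zs (S n \<omega>)\<bar> \<partial>M) \<le> \<beta>\<^sup>2 * (\<Sum>k\<in>{n..<m}. cb k) + 2 * \<beta> * sqrt (\<Sum>k\<in>{n..<m}. cb k)"
proof -
  define B where "B = (\<Sum>k\<in>{n..<m}. cb k)"
  have B0: "0 \<le> B" unfolding B_def by (intro sum_nonneg cb_nonneg)
  have EI: "(\<Sum>k\<in>{n..<m}. \<integral>\<omega>. 1 / (Tw k \<omega>)\<^sup>2 \<partial>M) \<le> B"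
    unfolding B_def by (intro sum_mono E_inv2) (use n in auto)
  have idd: "integrable M (\<lambda>\<omega>. \<bar>dd (S k \<omega>)\<bar>)" for k
    by (rule integrable_bdd[where C=1]) (use dd_b[OF S_st] in auto)
  have iMa: "integrable M (Mart n m)"
    by (rule integrable_bdd[where C="2 * real m"]) (use Mart_b in auto)
  have iM2: "integrable M (\<lambda>\<omega>. (Mart n m \<omega>)\<^sup>2)"
  proof (rule integrable_bdd[where C="(2 * real m)\<^sup>2"])
    fix \<omega>
    have "\<bar>Mart n m \<omega>\<bar>\<^sup>2 \<le> (2 * real m)\<^sup>2" by (rule power_mono[OF Mart_b abs_ge_zero])
    then show "\<bar>(Mart n m \<omega>)\<^sup>2\<bar> \<le> (2 * real m)\<^sup>2" by simp
  qed measurable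
  have iR: "integrable M (\<lambda>\<omega>. (\<Sum>k\<in>{n..<m}. \<bar>dd (S k \<omega>)\<bar>) + \<bar>Mart n m \<omega>\<bar>)"
    using idd iMa by auto
  have iL: "integrable M (\<lambda>\<omega>. \<bar>Zs (S m \<omega>) - Zs (S n \<omega>)\<bar>)"
    by (rule integrable_bdd[where C=1]) (auto intro: Zs_diff)
  have "(\<integral>\<omega>. \<bar>Zs (S m \<omega>) - Zs (S n \<omega>)\<bar> \<partial>M) \<le> (\<integral>\<omega>. (\<Sum>k\<in>{n..<m}. \<bar>dd (S k \<omega>)\<bar>) + \<bar>Mart n m \<omega>\<bar> \<partial>M)"
  proof (intro integral_mono iL iR)
    fix \<omega>
    have "\<bar>Zs (S m \<omega>) - Zs (S n \<omega>)\<bar> \<le> \<bar>\<Sum>k\<in>{n..<m}. dd (S k \<omega>)\<bar> + \<bar>Mart n m \<omega>\<bar>"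
      unfolding decomp[OF nm] by (rule abs_triangle_ineq)
    also have "\<dots> \<le> (\<Sum>k\<in>{n..<m}. \<bar>dd (S k \<omega>)\<bar>) + \<bar>Mart n m \<omega>\<bar>" by (simp add: sum_abs)
    finally show "\<bar>Zs (S m \<omega>) - Zs (S n \<omega>)\<bar> \<le> (\<Sum>k\<in>{n..<m}. \<bar>dd (S k \<omega>)\<bar>) + \<bar>Mart n m \<omega>\<bar>" .
  qed
  also have "\<dots> = (\<Sum>k\<in>{n..<m}. \<integral>\<omega>. \<bar>dd (S k \<omega>)\<bar> \<partial>M) + (\<integral>\<omega>. \<bar>Mart n m \<omega>\<bar> \<partial>M)"
    using idd iMa by (simp add: Bochner_Integration.integral_sum)
  also have "(\<Sum>k\<in>{n..<m}. \<integral>\<omega>. \<bar>dd (S k \<omega>)\<bar> \<partial>M) \<le> (\<Sum>k\<in>{n..<m}. \<beta>\<^sup>2 * (\<integral>\<omega>. 1 / (Tw k \<omega>)\<^sup>2 \<partial>M))"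
  proof (intro sum_mono)
    fix k
    have "(\<integral>\<omega>. \<bar>dd (S k \<omega>)\<bar> \<partial>M) \<le> (\<integral>\<omega>. \<beta>\<^sup>2 * (1 / (Tw k \<omega>)\<^sup>2) \<partial>M)"
      by (intro integral_mono idd integrable_mult_right inv2_int)
         (use dd_bounds(1)[OF S_st] in \<open>simp add: Tw_def\<close>)
    then show "(\<integral>\<omega>. \<bar>dd (S k \<omega>)\<bar> \<partial>M) \<le> \<beta>\<^sup>2 * (\<integral>\<omega>. 1 / (Tw k \<omega>)\<^sup>2 \<partial>M)" by (simp only: integral_mult_right_zero)
  qed
  also have "(\<Sum>k\<in>{n..<m}. \<beta>\<^sup>2 * (\<integral>\<omega>. 1 / (Tw k \<omega>)\<^sup>2 \<partial>M)) \<le> \<beta>\<^sup>2 * B"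
    using EI by (simp add: sum_distrib_left[symmetric] mult_left_mono)
  also have "(\<integral>\<omega>. \<bar>Mart n m \<omega>\<bar> \<partial>M) \<le> 2 * \<beta> * sqrt B"
  proof -
    have "(\<integral>\<omega>. \<bar>Mart n m \<omega>\<bar> \<partial>M) \<le> sqrt (\<integral>\<omega>. (Mart n m \<omega>)\<^sup>2 \<partial>M)"
      by (rule E_abs_sqrt[OF iMa iM2])
    also have "\<dots> \<le> sqrt (4 * \<beta>\<^sup>2 * B)"
      using Mart_sq[OF nm] EI bpos by (intro real_sqrt_le_mono) (smt (verit) mult_left_mono zero_le_power2)
    also have "\<dots> = 2 * \<beta> * sqrt B" using bpos by (simp add: real_sqrt_mult)
    finally show ?thesis .
  qed
  finally show ?thesis by (simp add: B_def)
qed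

end

lemma rru_qcong:
  assumes "\<And>i. 1 \<le> i \<Longrightarrow> i \<le> n \<Longrightarrow> qX (v i) = qX' (v i) \<and> qY (w i) = qY' (w i)"
  shows "rru qX qY x y u v w n = rru qX' qY' x y u v w n"
  using assms by (induction n) (auto simp: rru_Suc_nxt nxt_def simp del: rru.simps(2))

definition q0g :: "real \<Rightarrow> real \<Rightarrow> real" where "q0g \<beta> m0 = 1 - m0 / (2 * \<beta>)"
definition c0g :: "real \<Rightarrow> real \<Rightarrow> real" where "c0g \<beta> m0 = - ln (q0g \<beta> m0) / 2"
definition cbg :: "real \<Rightarrow> real \<Rightarrow> nat \<Rightarrow> nat \<Rightarrow> real" where
  "cbg \<beta> m0 n0 k = 1 / (\<beta> * c0g \<beta> m0 * real k)\<^sup>2 + (real n0)\<^sup>2 * exp (- c0g \<beta> m0) ^ k"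
definition tailg :: "real \<Rightarrow> real \<Rightarrow> nat \<Rightarrow> nat \<Rightarrow> real" where
  "tailg \<beta> m0 n0 n = (\<Sum>j. cbg \<beta> m0 n0 (j + n))"
definition bndg :: "real \<Rightarrow> real \<Rightarrow> nat \<Rightarrow> nat \<Rightarrow> real" where
  "bndg \<beta> m0 n0 n = \<beta>\<^sup>2 * tailg \<beta> m0 n0 n + 2 * \<beta> * sqrt (tailg \<beta> m0 n0 n)"

context mainl begin

lemma cb_eq: "cb = cbg \<beta> m0 n0"
  by (rule ext) (simp add: cb_def cbg_def c0_def c0g_def q0_def q0g_def r1_def)

lemma AE_eq: "AE \<omega> in M. \<forall>k. rru_Z \<mu> \<nu> x y U V W k \<omega> = Zs (S k \<omega>)"
  using AE_unit
proof eventually_elim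
  case (elim \<omega>)
  show ?case
  proof
    fix k
    have "rru (quantile \<mu>) (quantile \<nu>) x y (\<lambda>i. U i \<omega>) (\<lambda>i. V i \<omega>) (\<lambda>i. W i \<omega>) k = S k \<omega>"
      unfolding S_def
    proof (rule rru_qcong)
      fix i
      have h: "0 < V i \<omega> \<and> V i \<omega> \<le> 1 \<and> 0 < W i \<omega> \<and> W i \<omega> \<le> 1" using elim by blast
      then show "quantile \<mu> (V i \<omega>) = qc \<beta> \<mu> (V i \<omega>) \<and> quantile \<nu> (W i \<omega>) = qc \<beta> \<nu> (W i \<omega>)"
        by (simp add: qc_def)
    qed
    then show "rru_Z \<mu> \<nu> x y U V W k \<omega> = Zs (S k \<omega>)"
      by (simp add: rru_Z_def Zs_def split: prod.split)
  qed
qed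

lemma final_loc:
  assumes Zm[measurable]: "Zinf \<in> borel_measurable M"
    and lim: "AE \<omega> in M. (\<lambda>k. rru_Z \<mu> \<nu> x y U V W k \<omega>) \<longlonglongrightarrow> Zinf \<omega>"
    and n: "1 \<le> n"
  shows "(\<integral>\<omega>. \<bar>rru_Z \<mu> \<nu> x y U V W n \<omega> - Zinf \<omega>\<bar> \<partial>M) \<le> bndg \<beta> m0 n0 n"
proof -
  define tl where "tl = tailg \<beta> m0 n0 n"
  have sm: "summable (\<lambda>j. cb (j + n))" by (rule summable_ignore_initial_segment[OF cb_summable])
  have tl0: "0 \<le> tl" unfolding tl_def tailg_def cb_eq[symmetric]
    by (rule suminf_nonneg[OF sm]) (simp add: cb_nonneg)
  have Bm: "(\<Sum>k\<in>{n..<m}. cb k) \<le> tl" if "n \<le> m" for m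
  proof -
    have "(\<Sum>k\<in>{n..<m}. cb k) = (\<Sum>j\<in>{0..<m - n}. cb (j + n))"
      using sum.shift_bounds_nat_ivl[of cb 0 n "m - n"] that by simp
    also have "\<dots> \<le> (\<Sum>j. cb (j + n))"
      by (rule sum_le_suminf[OF sm]) (auto simp: cb_nonneg)
    finally show ?thesis by (simp add: tl_def tailg_def cb_eq)
  qed
  have bnd: "(\<integral>\<omega>. \<bar>Zs (S m \<omega>) - Zs (S n \<omega>)\<bar> \<partial>M) \<le> \<beta>\<^sup>2 * tl + 2 * \<beta> * sqrt tl" if "n \<le> m" for m
  proof -
    have B0: "0 \<le> (\<Sum>k\<in>{n..<m}. cb k)" by (intro sum_nonneg cb_nonneg)
    have "\<beta>\<^sup>2 * (\<Sum>k\<in>{n..<m}. cb k) + 2 * \<beta> * sqrt (\<Sum>k\<in>{n..<m}. cb k) \<le> \<beta>\<^sup>2 * tl + 2 * \<beta> * sqrt tl"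
      using Bm[OF that] bpos by (intro add_mono mult_left_mono real_sqrt_le_mono) auto
    then show ?thesis using main_bound[OF n that] by linarith
  qed
  have lim2: "AE \<omega> in M. (\<lambda>m. \<bar>Zs (S m \<omega>) - Zs (S n \<omega>)\<bar>) \<longlonglongrightarrow> \<bar>Zinf \<omega> - Zs (S n \<omega>)\<bar>"
    using lim AE_eq
  proof eventually_elim
    case (elim \<omega>)
    then have "(\<lambda>k. Zs (S k \<omega>)) \<longlonglongrightarrow> Zinf \<omega>" by simp
    then show ?case by (intro tendsto_intros)
  qed
  have conv: "(\<lambda>m. \<integral>\<omega>. \<bar>Zs (S m \<omega>) - Zs (S n \<omega>)\<bar> \<partial>M) \<longlonglongrightarrow> (\<integral>\<omega>. \<bar>Zinf \<omega> - Zs (S n \<omega>)\<bar> \<partial>M)"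
    by (rule integral_dominated_convergence[where w="\<lambda>_. 1"]) (use lim2 Zs_diff in auto)
  have E1: "(\<integral>\<omega>. \<bar>Zinf \<omega> - Zs (S n \<omega>)\<bar> \<partial>M) \<le> \<beta>\<^sup>2 * tl + 2 * \<beta> * sqrt tl"
    by (rule LIMSEQ_le_const2[OF conv]) (use bnd in auto)
  have bnd0: "0 \<le> \<beta>\<^sup>2 * tl + 2 * \<beta> * sqrt tl" using tl0 bpos by simp
  show ?thesis
  proof (cases "integrable M (\<lambda>\<omega>. \<bar>rru_Z \<mu> \<nu> x y U V W n \<omega> - Zinf \<omega>\<bar>)")
    case True
    then have mR: "(\<lambda>\<omega>. \<bar>rru_Z \<mu> \<nu> x y U V W n \<omega> - Zinf \<omega>\<bar>) \<in> borel_measurable M"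
      by (rule borel_measurable_integrable)
    have "(\<integral>\<omega>. \<bar>rru_Z \<mu> \<nu> x y U V W n \<omega> - Zinf \<omega>\<bar> \<partial>M) = (\<integral>\<omega>. \<bar>Zinf \<omega> - Zs (S n \<omega>)\<bar> \<partial>M)"
      by (rule integral_cong_AE[OF mR]) (use AE_eq in \<open>auto elim!: eventually_mono simp: abs_minus_commute\<close>)
    then show ?thesis using E1 by (simp add: bndg_def tl_def)
  next
    case False
    then show ?thesis using bnd0 by (simp add: not_integrable_integral_eq bndg_def tl_def)
  qed
qed

end

lemma cbg_summable:
  assumes "0 < m0" "m0 \<le> \<beta>"
  shows "summable (cbg \<beta> m0 n0)" and "\<And>k. 0 \<le> cbg \<beta> m0 n0 k"
proof -
  have q: "0 < q0g \<beta> m0" "q0g \<beta> m0 < 1" using assms by (auto simp: q0g_def field_simps)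
  have c: "0 < c0g \<beta> m0" using q by (simp add: c0g_def)
  have s1: "summable (\<lambda>k. inverse (real k ^ 2))" by (rule inverse_power_summable) simp
  have F: "summable (\<lambda>k. (1 / (\<beta> * c0g \<beta> m0)\<^sup>2) * inverse (real k ^ 2))" by (rule summable_mult[OF s1])
  have E: "(\<lambda>k. (1 / (\<beta> * c0g \<beta> m0)\<^sup>2) * inverse (real k ^ 2)) = (\<lambda>k. 1 / (\<beta> * c0g \<beta> m0 * real k)\<^sup>2)"
    by (rule ext) (simp add: field_simps power_mult_distrib)
  have a: "summable (\<lambda>k. 1 / (\<beta> * c0g \<beta> m0 * real k)\<^sup>2)" using F unfolding E .
  have b: "summable (\<lambda>k. (real n0)\<^sup>2 * exp (- c0g \<beta> m0) ^ k)"
    by (rule summable_mult, rule summable_geometric) (use c in simp)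
  show "summable (cbg \<beta> m0 n0)" unfolding cbg_def[abs_def] by (rule summable_add[OF a b])
  show "0 \<le> cbg \<beta> m0 n0 k" for k by (simp add: cbg_def)
qed

lemma bndg_lim:
  assumes "0 < m0" "m0 \<le> \<beta>"
  shows "bndg \<beta> m0 n0 \<longlonglongrightarrow> 0"
proof -
  note s = cbg_summable[OF assms]
  have "(\<lambda>n. tailg \<beta> m0 n0 n) = (\<lambda>n. (\<Sum>j. cbg \<beta> m0 n0 j) - (\<Sum>i<n. cbg \<beta> m0 n0 i))"
    by (rule ext) (simp add: tailg_def suminf_minus_initial_segment[OF s(1)])
  moreover have "(\<lambda>n. (\<Sum>j. cbg \<beta> m0 n0 j) - (\<Sum>i<n. cbg \<beta> m0 n0 i)) \<longlonglongrightarrow> (\<Sum>j. cbg \<beta> m0 n0 j) - (\<Sum>j. cbg \<beta> m0 n0 j)"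
    by (intro tendsto_intros summable_LIMSEQ s(1))
  ultimately have t: "(\<lambda>n. tailg \<beta> m0 n0 n) \<longlonglongrightarrow> 0" by simp
  have "(\<lambda>n. \<beta>\<^sup>2 * tailg \<beta> m0 n0 n + 2 * \<beta> * sqrt (tailg \<beta> m0 n0 n)) \<longlonglongrightarrow> \<beta>\<^sup>2 * 0 + 2 * \<beta> * sqrt 0"
    by (intro tendsto_intros t)
  then show ?thesis by (simp add: bndg_def[abs_def])
qed

theorem lemma3p4:
  fixes \<beta> m0 :: real
  assumes "0 < m0" and "m0 \<le> \<beta>"
  shows "\<forall>n0::nat. n0 \<ge> 1 \<longrightarrow> (\<forall>\<epsilon>::real. \<epsilon> > 0 \<longrightarrow>
    (\<exists>N::nat. \<forall>(M::'a measure) U V W (Zinf :: 'a \<Rightarrow> real) \<mu> \<nu> (x::real) (y::real) (n::nat).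
       in_P \<beta> m0 \<mu> \<nu> \<longrightarrow>
       driving_noise M U V W \<longrightarrow>
       x \<ge> 0 \<longrightarrow> y \<ge> 0 \<longrightarrow> (x, y) \<noteq> (0, 0) \<longrightarrow> x + y \<ge> 1 / real n0 \<longrightarrow>
       Zinf \<in> borel_measurable M \<longrightarrow>
       (AE \<omega> in M. (\<lambda>k. rru_Z \<mu> \<nu> x y U V W k \<omega>) \<longlonglongrightarrow> Zinf \<omega>) \<longrightarrow>
       n \<ge> N \<longrightarrow>
       (\<integral>\<omega>. \<bar>rru_Z \<mu> \<nu> x y U V W n \<omega> - Zinf \<omega>\<bar> \<partial>M) \<le> \<epsilon>))"
proof (intro allI impI)
  fix n0 :: nat and \<epsilon> :: real
  assume n0: "1 \<le> n0" and e: "0 < \<epsilon>"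
  have "eventually (\<lambda>n. bndg \<beta> m0 n0 n < \<epsilon>) sequentially"
    using order_tendstoD(2)[OF bndg_lim[OF assms, of n0] e] .
  then obtain N0 where N0: "\<And>n. N0 \<le> n \<Longrightarrow> bndg \<beta> m0 n0 n < \<epsilon>"
    unfolding eventually_sequentially by blast
  show "\<exists>N::nat. \<forall>(M::'a measure) U V W (Zinf :: 'a \<Rightarrow> real) \<mu> \<nu> (x::real) (y::real) (n::nat).
       in_P \<beta> m0 \<mu> \<nu> \<longrightarrow>
       driving_noise M U V W \<longrightarrow>
       x \<ge> 0 \<longrightarrow> y \<ge> 0 \<longrightarrow> (x, y) \<noteq> (0, 0) \<longrightarrow> x + y \<ge> 1 / real n0 \<longrightarrow>
       Zinf \<in> borel_measurable M \<longrightarrow>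
       (AE \<omega> in M. (\<lambda>k. rru_Z \<mu> \<nu> x y U V W k \<omega>) \<longlonglongrightarrow> Zinf \<omega>) \<longrightarrow>
       n \<ge> N \<longrightarrow>
       (\<integral>\<omega>. \<bar>rru_Z \<mu> \<nu> x y U V W n \<omega> - Zinf \<omega>\<bar> \<partial>M) \<le> \<epsilon>"
  proof (intro exI[of _ "max N0 1"] allI impI)
    fix M :: "'a measure" and U V W and Zinf :: "'a \<Rightarrow> real" and \<mu> \<nu> and x y :: real and n :: nat
    assume inP: "in_P \<beta> m0 \<mu> \<nu>" and dn: "driving_noise M U V W" and x0: "0 \<le> x" and y0: "0 \<le> y"
      and "(x, y) \<noteq> (0, 0)" and xyn: "1 / real n0 \<le> x + y" and Zm: "Zinf \<in> borel_measurable M"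
      and lim: "AE \<omega> in M. (\<lambda>k. rru_Z \<mu> \<nu> x y U V W k \<omega>) \<longlonglongrightarrow> Zinf \<omega>" and nN: "max N0 1 \<le> n"
    have ps: "prob_space M" using dn by (simp add: driving_noise_def)
    interpret mainl M U V W \<mu> \<nu> \<beta> m0 x y n0
    proof (intro mainl.intro noise.intro noise_axioms.intro mainl_axioms.intro ps)
    qed (use dn inP assms x0 y0 n0 xyn in auto)
    have "(\<integral>\<omega>. \<bar>rru_Z \<mu> \<nu> x y U V W n \<omega> - Zinf \<omega>\<bar> \<partial>M) \<le> bndg \<beta> m0 n0 n"
      by (rule final_loc[OF Zm lim]) (use nN in simp)
    also have "\<dots> < \<epsilon>" using N0 nN by simp
    finally show "(\<integral>\<omega>. \<bar>rru_Z \<mu> \<nu> x y U V W n \<omega> - Zinf \<omega>\<bar> \<partial>M) \<le> \<epsilon>" by simp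
  qed
qed

end
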